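(* Let $\rho:E\to B$ be a stream covering. (1) $E$ is path-ordered if and only if $B$ is path-ordered. (2) For each $e\in E$, every homotopy through dipaths on $B$ starting at $\rho(e)$ (i.e. a continuous $H:[0,1]\times[0,1]\to B$ such that each $H(s,-)$ is a dipath, with $H(0,0)=\rho(e)$) lifts under $\rho$ to a unique homotopy through dipaths $\tilde H$ on $E$ with $\rho\circ\tilde H=H$ and $\tilde H(0,0)=e$; likewise for homotopies ending at $\rho(e)$ (with $(0,0)$ replaced by $(0,1)$).
   Context: Streams: a circulation on a space $X$ assigns to each open $V\subset X$ a preorder $\leqslant_V$ such that for every collection $\mathcal{O}$ of open sets, $\leqslant_{\bigcup\mathcal{O}}$ is the preorder with smallest graph containing $\bigcup_{V\in\mathcal{O}}\mathrm{graph}(\leqslant_V)$; a stream is a space with a circulation; a stream map $f:X\to Y$ is continuous with $f(x)\leqslant_V f(y)$ whenever $x\leqslant_{f^{-1}V}y$. An open substream of $X$ is an open $V$ with circulation $W\mapsto\leqslant_W$. A stream covering is a surjective stream map $\rho:E\to B$ such that $B$ is covered by open substreams whose preimages are disjoint unions of open substreams each mapped by $\rho$ isomorphically (as streams) onto the corresponding open substream. $\vec\square[1]$ is $[0,1]$ with circulation $x\leqslant_V y$ iff $x\le y$ and $[x,y]\subset V$; a dipath on $X$ is a stream map $\vec\square[1]\to X$. $X$ is path-ordered if whenever $V\subset X$ is open and $x\leqslant_V y$ there is a dipath from $x$ to $y$ with image in $V$. *)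

theory Defs
  imports "HOL-Analysis.Analysis"
begin

text \<open>A stream: an underlying topological space together with an assignment
  of a relation (the graph of the preorder) to each set; only values on open sets matter.\<close>
type_synonym 'a strm = "'a topology \<times> ('a set \<Rightarrow> ('a \<times> 'a) set)"

definition preorder_graph :: "'a set \<Rightarrow> ('a \<times> 'a) set \<Rightarrow> bool" where
  "preorder_graph V R \<longleftrightarrow> R \<subseteq> V \<times> V \<and> (\<forall>x\<in>V. (x, x) \<in> R) \<and> trans R"

definition circulation :: "'a topology \<Rightarrow> ('a set \<Rightarrow> ('a \<times> 'a) set) \<Rightarrow> bool" where
  "circulation X C \<longleftrightarrow>
     (\<forall>V. openin X V \<longrightarrow> preorder_graph V (C V)) \<and>
     (\<forall>\<O>. (\<forall>V\<in>\<O>. openin X V) \<longrightarrow>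
        C (\<Union>\<O>) = \<Inter>{R. preorder_graph (\<Union>\<O>) R \<and> (\<Union>V\<in>\<O>. C V) \<subseteq> R})"

definition is_stream :: "'a strm \<Rightarrow> bool" where
  "is_stream S \<longleftrightarrow> circulation (fst S) (snd S)"

definition stream_map :: "'a strm \<Rightarrow> 'b strm \<Rightarrow> ('a \<Rightarrow> 'b) \<Rightarrow> bool" where
  "stream_map S T f \<longleftrightarrow> continuous_map (fst S) (fst T) f \<and>
     (\<forall>V. openin (fst T) V \<longrightarrow>
        (\<forall>x y. (x, y) \<in> snd S (f -` V \<inter> topspace (fst S)) \<longrightarrow> (f x, f y) \<in> snd T V))"

text \<open>Open substream: open V with circulation W \<mapsto> \<le>_W (W open in V).\<close>
definition substream :: "'a strm \<Rightarrow> 'a set \<Rightarrow> 'a strm" where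
  "substream S V = (subtopology (fst S) V, snd S)"

definition stream_iso :: "'a strm \<Rightarrow> 'b strm \<Rightarrow> ('a \<Rightarrow> 'b) \<Rightarrow> bool" where
  "stream_iso S T f \<longleftrightarrow> stream_map S T f \<and>
     (\<exists>g. stream_map T S g \<and> (\<forall>x\<in>topspace (fst S). g (f x) = x) \<and>
          (\<forall>y\<in>topspace (fst T). f (g y) = y))"

definition stream_covering :: "'e strm \<Rightarrow> 'b strm \<Rightarrow> ('e \<Rightarrow> 'b) \<Rightarrow> bool" where
  "stream_covering E B \<rho> \<longleftrightarrow> is_stream E \<and> is_stream B \<and>
     stream_map E B \<rho> \<and> \<rho> ` topspace (fst E) = topspace (fst B) \<and>
     (\<exists>\<V>. (\<forall>U\<in>\<V>. openin (fst B) U) \<and> \<Union>\<V> = topspace (fst B) \<and>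
        (\<forall>U\<in>\<V>. \<exists>\<W>. (\<forall>W\<in>\<W>. openin (fst E) W) \<and>
            pairwise disjnt \<W> \<and>
            \<Union>\<W> = {x \<in> topspace (fst E). \<rho> x \<in> U} \<and>
            (\<forall>W\<in>\<W>. stream_iso (substream E W) (substream B U) \<rho>)))"

definition dinterval :: "real strm" where
  "dinterval = (top_of_set {0..1}, \<lambda>V. {(x, y). x \<le> y \<and> {x..y} \<subseteq> V})"

definition dipath :: "'a strm \<Rightarrow> (real \<Rightarrow> 'a) \<Rightarrow> bool" where
  "dipath X p \<longleftrightarrow> stream_map dinterval X p"

definition path_ordered :: "'a strm \<Rightarrow> bool" where
  "path_ordered X \<longleftrightarrow>
     (\<forall>V x y. openin (fst X) V \<and> (x, y) \<in> snd X V \<longrightarrow>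
        (\<exists>p. dipath X p \<and> p 0 = x \<and> p 1 = y \<and> p ` {0..1} \<subseteq> V))"

definition dihomotopy :: "'a strm \<Rightarrow> (real \<times> real \<Rightarrow> 'a) \<Rightarrow> bool" where
  "dihomotopy X H \<longleftrightarrow>
     continuous_map (prod_topology (top_of_set {0..1}) (top_of_set {0..1})) (fst X) H \<and>
     (\<forall>s\<in>{0..1}. dipath X (\<lambda>t. H (s, t)))"

end

theory Submission
  imports Defs
begin


lemma circ_pre:
  assumes "circulation X C" "openin X V" shows "preorder_graph V (C V)"
proof -
  have "\<forall>V. openin X V \<longrightarrow> preorder_graph V (C V)" using assms(1) unfolding circulation_def by (rule conjunct1)
  then show ?thesis using assms(2) by blast
qed

lemma circ_union:
  assumes "circulation X C" "\<forall>V\<in>\<O>. openin X V"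
  shows "C (\<Union>\<O>) = \<Inter>{R. preorder_graph (\<Union>\<O>) R \<and> (\<Union>V\<in>\<O>. C V) \<subseteq> R}"
proof -
  have h: "\<forall>\<O>. (\<forall>V\<in>\<O>. openin X V) \<longrightarrow>
        C (\<Union>\<O>) = \<Inter>{R. preorder_graph (\<Union>\<O>) R \<and> (\<Union>V\<in>\<O>. C V) \<subseteq> R}"
    using assms(1) unfolding circulation_def by (rule conjunct2)
  show ?thesis using h assms(2) by (elim allE impE)
qed

lemma circ_mono:
  assumes "circulation X C" "openin X A" "openin X B" "A \<subseteq> B"
  shows "C A \<subseteq> C B"
proof
  fix z assume z: "z \<in> C A"
  have o: "\<forall>V\<in>{A,B}. openin X V" using assms(2,3) by simp
  have eq: "C (\<Union>{A,B}) = \<Inter>{R. preorder_graph (\<Union>{A,B}) R \<and> (\<Union>V\<in>{A,B}. C V) \<subseteq> R}"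
    by (rule circ_union[OF assms(1) o])
  have u: "\<Union>{A,B} = B" using assms(4) by auto
  have u2: "(\<Union>V\<in>{A,B}. C V) = C A \<union> C B" by simp
  have zin: "z \<in> \<Inter>{R. preorder_graph B R \<and> C A \<union> C B \<subseteq> R}" using z by blast
  have eqB: "C B = \<Inter>{R. preorder_graph B R \<and> C A \<union> C B \<subseteq> R}" using eq unfolding u u2 .
  show "z \<in> C B" by (subst eqB) (rule zin)
qed

lemma circ_cover:
  assumes "circulation X C" "\<forall>V\<in>\<O>. openin X V" "preorder_graph (\<Union>\<O>) P"
    "\<forall>V\<in>\<O>. C V \<subseteq> P"
  shows "C (\<Union>\<O>) \<subseteq> P"
proof -
  have "C (\<Union>\<O>) = \<Inter>{R. preorder_graph (\<Union>\<O>) R \<and> (\<Union>V\<in>\<O>. C V) \<subseteq> R}"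
    by (rule circ_union[OF assms(1,2)])
  moreover have "P \<in> {R. preorder_graph (\<Union>\<O>) R \<and> (\<Union>V\<in>\<O>. C V) \<subseteq> R}" using assms(3,4) by blast
  ultimately show ?thesis by (simp add: Inter_lower)
qed

lemma stream_mapD:
  assumes "stream_map S T f" "openin (fst T) V" "(x, y) \<in> snd S (f -` V \<inter> topspace (fst S))"
  shows "(f x, f y) \<in> snd T V"
proof -
  have "\<forall>V. openin (fst T) V \<longrightarrow>
        (\<forall>x y. (x, y) \<in> snd S (f -` V \<inter> topspace (fst S)) \<longrightarrow> (f x, f y) \<in> snd T V)"
    using assms(1) unfolding stream_map_def by (rule conjunct2)
  then show ?thesis using assms(2,3) by blast
qed

lemma stream_map_cont: "stream_map S T f \<Longrightarrow> continuous_map (fst S) (fst T) f"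
  unfolding stream_map_def by (rule conjunct1)

lemma stream_mapI:
  assumes "continuous_map (fst S) (fst T) f"
    "\<And>V x y. openin (fst T) V \<Longrightarrow> (x, y) \<in> snd S (f -` V \<inter> topspace (fst S)) \<Longrightarrow> (f x, f y) \<in> snd T V"
  shows "stream_map S T f"
  unfolding stream_map_def using assms by blast

lemma stream_map_comp:
  assumes "stream_map S T f" "stream_map T U g"
  shows "stream_map S U (g \<circ> f)"
proof (rule stream_mapI)
  have cf: "continuous_map (fst S) (fst T) f" and cg: "continuous_map (fst T) (fst U) g"
    using assms stream_map_cont by blast+
  show "continuous_map (fst S) (fst U) (g \<circ> f)" using cf cg by (rule continuous_map_compose)
  fix V x y assume V: "openin (fst U) V" and xy: "(x, y) \<in> snd S ((g \<circ> f) -` V \<inter> topspace (fst S))"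
  have o: "openin (fst T) {z \<in> topspace (fst T). g z \<in> V}"
    using cg V by (rule openin_continuous_map_preimage)
  have eq0: "{z \<in> topspace (fst T). g z \<in> V} = g -` V \<inter> topspace (fst T)" by blast
  have eq: "f -` (g -` V \<inter> topspace (fst T)) \<inter> topspace (fst S) = (g \<circ> f) -` V \<inter> topspace (fst S)"
  proof -
    have "\<And>z. z \<in> topspace (fst S) \<Longrightarrow> f z \<in> topspace (fst T)"
      using cf by (rule continuous_map_image_subset_topspace[THEN subsetD, OF _ imageI])
    then show ?thesis by auto
  qed
  have "(f x, f y) \<in> snd T (g -` V \<inter> topspace (fst T))"
    using stream_mapD[OF assms(1) o[unfolded eq0]] xy eq by simp
  then show "((g \<circ> f) x, (g \<circ> f) y) \<in> snd U V"
    using stream_mapD[OF assms(2) V] by simp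
qed

lemma dipath_iff:
  "dipath X p \<longleftrightarrow> continuous_map (top_of_set {0..1}) (fst X) p \<and>
    (\<forall>V. openin (fst X) V \<longrightarrow> (\<forall>s t. s \<le> t \<and> {s..t} \<subseteq> {0..1} \<and> (\<forall>u\<in>{s..t}. p u \<in> V)
        \<longrightarrow> (p s, p t) \<in> snd X V))"
proof -
  have e: "\<And>V s t. ({s..t} \<subseteq> p -` V \<inter> {0..1}) = ({s..t} \<subseteq> {0..1} \<and> (\<forall>u\<in>{s..t}. p u \<in> V))" by blast
  show ?thesis unfolding dipath_def stream_map_def dinterval_def
    by (simp only: fst_conv snd_conv topspace_euclidean_subtopology mem_Collect_eq case_prod_conv e)
qed

lemma dipath_comp: "dipath X p \<Longrightarrow> stream_map X Y f \<Longrightarrow> dipath Y (f \<circ> p)"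
  unfolding dipath_def by (rule stream_map_comp)

lemma dipathD:
  assumes "dipath X p" "openin (fst X) V" "s \<le> t" "{s..t} \<subseteq> {0..1}" "\<And>u. u \<in> {s..t} \<Longrightarrow> p u \<in> V"
  shows "(p s, p t) \<in> snd X V"
proof -
  have "\<forall>V. openin (fst X) V \<longrightarrow> (\<forall>s t. s \<le> t \<and> {s..t} \<subseteq> {0..1} \<and> (\<forall>u\<in>{s..t}. p u \<in> V)
        \<longrightarrow> (p s, p t) \<in> snd X V)" using assms(1) unfolding dipath_iff by (rule conjunct2)
  then show ?thesis using assms(2-5) by blast
qed

lemma dipath_cont: "dipath X p \<Longrightarrow> continuous_map (top_of_set {0..1}) (fst X) p"
  unfolding dipath_iff by (rule conjunct1)

lemma dipathI:
  assumes "continuous_map (top_of_set {0..1}) (fst X) p"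
    "\<And>V s t. openin (fst X) V \<Longrightarrow> s \<le> t \<Longrightarrow> {s..t} \<subseteq> {0..1} \<Longrightarrow> (\<And>u. u \<in> {s..t} \<Longrightarrow> p u \<in> V)
        \<Longrightarrow> (p s, p t) \<in> snd X V"
  shows "dipath X p"
  unfolding dipath_iff using assms by blast

lemma dipath_const:
  assumes "is_stream X" "x \<in> topspace (fst X)"
  shows "dipath X (\<lambda>_. x)"
proof (rule dipathI)
  show "continuous_map (top_of_set {0..1}) (fst X) (\<lambda>_. x)" using assms(2) by (rule continuous_map_const[THEN iffD2, OF disjI2])
  fix V and s t :: real assume V: "openin (fst X) V" and h: "s \<le> t" "\<And>u. u \<in> {s..t} \<Longrightarrow> x \<in> V"
  have "s \<in> {s..t}" using h(1) by simp
  then have "x \<in> V" by (rule h(2))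
  moreover have "preorder_graph V (snd X V)" using assms(1) V unfolding is_stream_def by (rule circ_pre)
  ultimately show "(x, x) \<in> snd X V" unfolding preorder_graph_def by blast
qed



lemma half_aux: "(x::real)*2 = 1 \<Longrightarrow> p 1 = q 0 \<Longrightarrow> q(2*x-1) = p(2*x) \<and> p(2*x) = q(2*x-1)"
proof -
  assume a: "x*2 = 1" "p 1 = q 0"
  have e1: "2*x = 1" and e2: "2*x-1 = 0" using a by linarith+
  show ?thesis using a(2) by (simp only: e1 e2) simp
qed

lemma dipath_concat:
  assumes X: "is_stream X" and p: "dipath X p" and q: "dipath X q" and pq: "p 1 = q 0"
  shows "dipath X (\<lambda>t. if t \<le> 1/2 then p (2*t) else q (2*t - 1))" (is "dipath X ?r")
proof -
  have cp: "continuous_map (top_of_set {0..1}) (fst X) p" using p[unfolded dipath_iff] by (rule conjunct1)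
  have cq: "continuous_map (top_of_set {0..1}) (fst X) q" using q[unfolded dipath_iff] by (rule conjunct1)
  have c1: "continuous_map (top_of_set {0..1/2}) (fst X) (\<lambda>t. p (2*t))"
  proof -
    have "continuous_on {0..1/2} (\<lambda>t::real. 2*t)" by (intro continuous_on_mult_left continuous_on_id)
    moreover have "(\<lambda>t::real. 2*t) \<in> {0..1/2} \<rightarrow> {0..1}" by auto
    ultimately have "continuous_map (top_of_set {0..1/2}) (top_of_set {0..1}) (\<lambda>t::real. 2*t)"
      by (simp only: continuous_map_subtopology_eu)
    from continuous_map_compose[OF this cp] show ?thesis by (simp only: o_def)
  qed
  have c2: "continuous_map (top_of_set {1/2..1}) (fst X) (\<lambda>t. q (2*t - 1))"
  proof -
    have "continuous_on {1/2..1} (\<lambda>t::real. 2*t - 1)" by (intro continuous_on_diff continuous_on_mult_left continuous_on_id continuous_on_const)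
    moreover have "(\<lambda>t::real. 2*t - 1) \<in> {1/2..1} \<rightarrow> {0..1}" by auto
    ultimately have "continuous_map (top_of_set {1/2..1}) (top_of_set {0..1}) (\<lambda>t::real. 2*t - 1)"
      by (simp only: continuous_map_subtopology_eu)
    from continuous_map_compose[OF this cq] show ?thesis by (simp only: o_def)
  qed
  have s1: "{0..1} \<inter> {x. x \<in> {0..1} \<and> x \<le> 1/2} = {0..1/2::real}" by auto
  have s2: "{0..1} \<inter> {x. x \<in> {0..1} \<and> 1/2 \<le> x} = {1/2..1::real}" by auto
  have e1: "subtopology (top_of_set {0..1}) {x. x \<in> topspace (top_of_set {0..1}) \<and> x \<le> 1/2} = top_of_set {0..1/2::real}"
    unfolding subtopology_subtopology topspace_euclidean_subtopology s1 by (rule refl)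
  have e2: "subtopology (top_of_set {0..1}) {x. x \<in> topspace (top_of_set {0..1}) \<and> 1/2 \<le> x} = top_of_set {1/2..1::real}"
    unfolding subtopology_subtopology topspace_euclidean_subtopology s2 by (rule refl)
  have cm1: "continuous_map (top_of_set {0..1}) euclideanreal (\<lambda>x::real. x)" by (simp add: continuous_on_id)
  have cm2: "continuous_map (top_of_set {0..1}) euclideanreal (\<lambda>x::real. 1/2)" by (simp add: continuous_on_const)
  have cm3: "continuous_map (subtopology (top_of_set {0..1}) {x \<in> topspace (top_of_set {0..1}). x \<le> 1 / 2}) (fst X) (\<lambda>t. p (2*t))"
      unfolding e1 by (rule c1)
  have cm4: "continuous_map (subtopology (top_of_set {0..1}) {x \<in> topspace (top_of_set {0..1}). 1/2 \<le> x}) (fst X) (\<lambda>t. q (2*t-1))"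
      unfolding e2 by (rule c2)
  have cm5: "p (2*x) = q (2*x-1)" if "x \<in> topspace (top_of_set {0..1})" "x = 1/2" for x :: real
  proof -
    from that have "x*2 = 1" by simp
    then show "p (2*x) = q (2*x-1)" using pq half_aux[of x p q] by blast
  qed
  have cr: "continuous_map (top_of_set {0..1}) (fst X) ?r"
    by (rule continuous_map_cases_le[OF cm1 cm2 cm3 cm4 cm5])
  define r where "r = ?r"
  have rp: "r u = p (2*u)" if "u \<le> 1/2" for u
    using that unfolding r_def by simp
  have rq: "r u = q (2*u - 1)" if "u \<ge> 1/2" for u
  proof (cases "u = 1/2")
    case True then have "u*2 = 1" by simp
    then have eq: "p (2*u) = q (2*u-1)" using pq half_aux[of u p q] by blast
    have "u \<le> 1/2" using True by simp
    then show ?thesis using eq unfolding r_def by simp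
  qed (use that in \<open>auto simp: r_def\<close>)
  have "dipath X r" unfolding dipath_iff
  proof (intro conjI allI impI)
    show "continuous_map (top_of_set {0..1}) (fst X) r" unfolding r_def by (rule cr)
    fix V and s t :: real
    assume V: "openin (fst X) V" and h: "s \<le> t \<and> {s..t} \<subseteq> {0..1} \<and> (\<forall>u\<in>{s..t}. r u \<in> V)"
    have A: "(r a, r b) \<in> snd X V" if "s \<le> a" "a \<le> b" "b \<le> t" "b \<le> 1/2" for a b
    proof -
      have "(p (2*a), p (2*b)) \<in> snd X V"
      proof (rule p[unfolded dipath_iff, THEN conjunct2, rule_format, OF V], intro conjI)
        show "2*a \<le> 2*b" using that by simp
        show "{2*a..2*b} \<subseteq> {0..1}" using that h by auto
        show "\<forall>u\<in>{2*a..2*b}. p u \<in> V"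
        proof
          fix u assume u: "u \<in> {2*a..2*b}"
          then have "u/2 \<in> {s..t}" using that by auto
          then have "r (u/2) \<in> V" using h by blast
          moreover have "r (u/2) = p (2*(u/2))" by (rule rp) (use u that in auto)
          ultimately show "p u \<in> V" by simp
        qed
      qed
      moreover have "r a = p (2*a)" by (rule rp) (use that in auto)
      moreover have "r b = p (2*b)" by (rule rp) (use that in auto)
      ultimately show ?thesis by simp
    qed
    have B: "(r a, r b) \<in> snd X V" if "s \<le> a" "a \<le> b" "b \<le> t" "1/2 \<le> a" for a b
    proof -
      have "(q (2*a-1), q (2*b-1)) \<in> snd X V"
      proof (rule q[unfolded dipath_iff, THEN conjunct2, rule_format, OF V], intro conjI)
        show "2*a-1 \<le> 2*b-1" using that by simp
        show "{2*a-1..2*b-1} \<subseteq> {0..1}" using that h by auto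
        show "\<forall>u\<in>{2*a-1..2*b-1}. q u \<in> V"
        proof
          fix u assume u: "u \<in> {2*a-1..2*b-1}"
          then have "(u+1)/2 \<in> {s..t}" using that by auto
          then have "r ((u+1)/2) \<in> V" using h by blast
          moreover have "r ((u+1)/2) = q u"
          proof -
            have e: "2*((u+1)/2) - 1 = u" by (simp add: field_simps)
            have "(u+1)/2 \<ge> 1/2" using u that by auto
            then have "r ((u+1)/2) = q (2*((u+1)/2) - 1)" by (rule rq)
            then show ?thesis unfolding e .
          qed
          ultimately show "q u \<in> V" by simp
        qed
      qed
      moreover have "r a = q (2*a-1)" by (rule rq) (use that in auto)
      moreover have "r b = q (2*b-1)" by (rule rq) (use that in auto)
      ultimately show ?thesis by simp
    qed
    have pre: "preorder_graph V (snd X V)" using X V circ_pre unfolding is_stream_def by blast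
    show "(r s, r t) \<in> snd X V"
    proof (cases "t \<le> 1/2")
      case True then show ?thesis using A[of s t] h by auto
    next
      case False
      show ?thesis
      proof (cases "1/2 \<le> s")
        case True then show ?thesis using B[of s t] h by auto
      next
        case F2: False
        have "(r s, r (1/2)) \<in> snd X V" using A[of s "1/2"] h F2 False by auto
        moreover have "(r (1/2), r t) \<in> snd X V" using B[of "1/2" t] h F2 False by auto
        ultimately show ?thesis using pre unfolding preorder_graph_def trans_def by blast
      qed
    qed
  qed
  then show ?thesis unfolding r_def .
qed

definition PathRel :: "'a strm \<Rightarrow> 'a set \<Rightarrow> ('a \<times> 'a) set" where
  "PathRel X V = {(x, y). \<exists>p. dipath X p \<and> p 0 = x \<and> p 1 = y \<and> p ` {0..1} \<subseteq> V}"

lemma PathRel_preorder: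
  assumes X: "is_stream X" and V: "openin (fst X) V"
  shows "preorder_graph V (PathRel X V)"
  unfolding preorder_graph_def
proof (intro conjI ballI)
  show "PathRel X V \<subseteq> V \<times> V"
  proof
    fix w assume w: "w \<in> PathRel X V"
    obtain a b where ab: "w = (a, b)" by (cases w)
    have "\<exists>p. dipath X p \<and> p 0 = a \<and> p 1 = b \<and> p ` {0..1} \<subseteq> V" using w unfolding ab PathRel_def by simp
    then obtain p where p: "dipath X p" "p 0 = a" "p 1 = b" "p ` {0..1} \<subseteq> V" by (elim exE conjE)
    have "p 0 \<in> V" "p 1 \<in> V" using p(4) by auto
    then show "w \<in> V \<times> V" using p ab by simp
  qed
  fix x assume x: "x \<in> V"
  then have "x \<in> topspace (fst X)" using V openin_subset by blast
  then have "dipath X (\<lambda>_. x)" by (rule dipath_const[OF X])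
  then have "\<exists>p. dipath X p \<and> p 0 = x \<and> p 1 = x \<and> p ` {0..1} \<subseteq> V"
    using x by (intro exI[of _ "\<lambda>_. x"]) auto
  then show "(x, x) \<in> PathRel X V" unfolding PathRel_def by simp
next
  show "trans (PathRel X V)" unfolding trans_def
  proof (intro allI impI)
    fix x y z assume "(x, y) \<in> PathRel X V" "(y, z) \<in> PathRel X V"
    then obtain p q where p: "dipath X p" "p 0 = x" "p 1 = y" "p ` {0..1} \<subseteq> V"
      and q: "dipath X q" "q 0 = y" "q 1 = z" "q ` {0..1} \<subseteq> V" unfolding PathRel_def by auto
    define r where "r = (\<lambda>t::real. if t \<le> 1/2 then p (2*t) else q (2*t - 1))"
    have pq: "p 1 = q 0" using p(3) q(2) by simp
    have d: "dipath X r" unfolding r_def by (rule dipath_concat[OF X p(1) q(1) pq])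
    have r0: "r 0 = x" using p(2) unfolding r_def by simp
    have r1: "r 1 = z" using q(3) unfolding r_def by simp
    have im: "r ` {0..1} \<subseteq> V"
    proof
      fix w assume "w \<in> r ` {0..1}"
      then obtain t where t: "t \<in> {0..1}" "w = r t" by blast
      show "w \<in> V"
      proof (cases "t \<le> 1/2")
        case True then have "2*t \<in> {0..1}" using t by auto
        then have "p (2*t) \<in> V" using p(4) by blast
        then show ?thesis using t True unfolding r_def by simp
      next
        case False then have "2*t-1 \<in> {0..1}" using t by auto
        then have "q (2*t-1) \<in> V" using q(4) by blast
        then show ?thesis using t False unfolding r_def by simp
      qed
    qed
    have "\<exists>r. dipath X r \<and> r 0 = x \<and> r 1 = z \<and> r ` {0..1} \<subseteq> V"
      using d r0 r1 im by (intro exI[of _ r] conjI)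
    then show "(x, z) \<in> PathRel X V" unfolding PathRel_def by simp
  qed
qed



lemma top_sub_open: "openin X W \<Longrightarrow> topspace (subtopology X W) = W"
  by (metis openin_subset topspace_subtopology_subset)

lemma substream_iso_unfold:
  assumes "stream_iso (substream E W) (substream B U) \<rho>" "openin (fst E) W" "openin (fst B) U"
  shows "\<exists>g. stream_map (substream E W) (substream B U) \<rho> \<and> stream_map (substream B U) (substream E W) g
     \<and> (\<forall>x\<in>W. g (\<rho> x) = x) \<and> (\<forall>y\<in>U. \<rho> (g y) = y)"
proof -
  have tW: "topspace (fst (substream E W)) = W" using assms(2) unfolding substream_def fst_conv by (rule top_sub_open)
  have tU: "topspace (fst (substream B U)) = U" using assms(3) unfolding substream_def fst_conv by (rule top_sub_open)
  have h: "stream_map (substream E W) (substream B U) \<rho> \<and> (\<exists>g. stream_map (substream B U) (substream E W) g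
     \<and> (\<forall>x\<in>W. g (\<rho> x) = x) \<and> (\<forall>y\<in>U. \<rho> (g y) = y))"
    using assms(1) unfolding stream_iso_def tW tU .
  then obtain g where g: "stream_map (substream E W) (substream B U) \<rho>" "stream_map (substream B U) (substream E W) g"
     "\<forall>x\<in>W. g (\<rho> x) = x" "\<forall>y\<in>U. \<rho> (g y) = y" by (elim conjE exE)
  show ?thesis using g by (intro exI[of _ g] conjI)
qed

locale scov =
  fixes E :: "'e strm" and B :: "'b strm" and \<rho> :: "'e \<Rightarrow> 'b"
  assumes cov: "stream_covering E B \<rho>"
begin

definition sheet :: "'e set \<Rightarrow> 'b set \<Rightarrow> ('b \<Rightarrow> 'e) \<Rightarrow> bool" where
  "sheet W U g \<longleftrightarrow> openin (fst E) W \<and> openin (fst B) U \<and>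
     stream_map (substream E W) (substream B U) \<rho> \<and> stream_map (substream B U) (substream E W) g
     \<and> (\<forall>x\<in>W. g (\<rho> x) = x) \<and> (\<forall>y\<in>U. \<rho> (g y) = y)"

definition evenly :: "'b set \<Rightarrow> bool" where
  "evenly U \<longleftrightarrow> openin (fst B) U \<and> (\<exists>\<W>. (\<forall>W\<in>\<W>. openin (fst E) W) \<and>
            pairwise disjnt \<W> \<and>
            \<Union>\<W> = {x \<in> topspace (fst E). \<rho> x \<in> U} \<and>
            (\<forall>W\<in>\<W>. \<exists>g. sheet W U g))"

lemma isE: "is_stream E" using cov unfolding stream_covering_def by (elim conjE)
lemma isB: "is_stream B" using cov unfolding stream_covering_def by (elim conjE)
lemma smap: "stream_map E B \<rho>" using cov unfolding stream_covering_def by (elim conjE)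
lemma surj: "\<rho> ` topspace (fst E) = topspace (fst B)" using cov unfolding stream_covering_def by (elim conjE)

lemma circE: "circulation (fst E) (snd E)" using isE unfolding is_stream_def .
lemma circB: "circulation (fst B) (snd B)" using isB unfolding is_stream_def .

lemma cont: "continuous_map (fst E) (fst B) \<rho>" using smap by (rule stream_map_cont)

lemma rho_top: "x \<in> topspace (fst E) \<Longrightarrow> \<rho> x \<in> topspace (fst B)"
  using surj by blast

lemma evenly_cover:
  assumes b: "b \<in> topspace (fst B)" shows "\<exists>U. evenly U \<and> b \<in> U"
proof -
  have "\<exists>\<V>. (\<forall>U\<in>\<V>. openin (fst B) U) \<and> \<Union>\<V> = topspace (fst B) \<and>
        (\<forall>U\<in>\<V>. \<exists>\<W>. (\<forall>W\<in>\<W>. openin (fst E) W) \<and>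
            pairwise disjnt \<W> \<and>
            \<Union>\<W> = {x \<in> topspace (fst E). \<rho> x \<in> U} \<and>
            (\<forall>W\<in>\<W>. stream_iso (substream E W) (substream B U) \<rho>))"
    using cov unfolding stream_covering_def by (elim conjE)
  then obtain \<V> where V1: "\<forall>U\<in>\<V>. openin (fst B) U" and V2: "\<Union>\<V> = topspace (fst B)" and
     V3: "\<forall>U\<in>\<V>. \<exists>\<W>. (\<forall>W\<in>\<W>. openin (fst E) W) \<and> pairwise disjnt \<W> \<and>
            \<Union>\<W> = {x \<in> topspace (fst E). \<rho> x \<in> U} \<and>
            (\<forall>W\<in>\<W>. stream_iso (substream E W) (substream B U) \<rho>)"
    by (elim exE conjE)
  from b V2 obtain U where U: "U \<in> \<V>" "b \<in> U" by blast
  have "\<exists>\<W>. (\<forall>W\<in>\<W>. openin (fst E) W) \<and> pairwise disjnt \<W> \<and>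
            \<Union>\<W> = {x \<in> topspace (fst E). \<rho> x \<in> U} \<and>
            (\<forall>W\<in>\<W>. stream_iso (substream E W) (substream B U) \<rho>)" using V3 U(1) by (rule bspec)
  then obtain \<W> where W1: "\<forall>W\<in>\<W>. openin (fst E) W" and W2: "pairwise disjnt \<W>" and
     W3: "\<Union>\<W> = {x \<in> topspace (fst E). \<rho> x \<in> U}" and W4: "\<forall>W\<in>\<W>. stream_iso (substream E W) (substream B U) \<rho>"
    by (elim exE conjE)
  have oU: "openin (fst B) U" using V1 U(1) by (rule bspec)
  have "\<exists>g. sheet W U g" if "W \<in> \<W>" for W
  proof -
    have oW: "openin (fst E) W" using W1 that by (rule bspec)
    have "stream_iso (substream E W) (substream B U) \<rho>" using W4 that by (rule bspec)
    from substream_iso_unfold[OF this oW oU] obtain g where "stream_map (substream E W) (substream B U) \<rho> \<and> stream_map (substream B U) (substream E W) g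
     \<and> (\<forall>x\<in>W. g (\<rho> x) = x) \<and> (\<forall>y\<in>U. \<rho> (g y) = y)" by (elim exE)
    then have "sheet W U g" unfolding sheet_def using oW oU by (intro conjI) (elim conjE; assumption)+
    then show ?thesis by blast
  qed
  then have W5: "\<forall>W\<in>\<W>. \<exists>g. sheet W U g" by (rule ballI)
  have "evenly U" unfolding evenly_def using oU W1 W2 W3 W5 by (intro conjI exI[of _ \<W>])
  then show ?thesis using U(2) by (intro exI conjI)
qed

lemma sheetD1: "sheet W U g \<Longrightarrow> openin (fst E) W" unfolding sheet_def by (elim conjE)
lemma sheetD2: "sheet W U g \<Longrightarrow> openin (fst B) U" unfolding sheet_def by (elim conjE)
lemma sheetD3: "sheet W U g \<Longrightarrow> stream_map (substream E W) (substream B U) \<rho>" unfolding sheet_def by (elim conjE)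
lemma sheetD4: "sheet W U g \<Longrightarrow> stream_map (substream B U) (substream E W) g" unfolding sheet_def by (elim conjE)
lemma sheetD5: "sheet W U g \<Longrightarrow> x \<in> W \<Longrightarrow> g (\<rho> x) = x"
proof -
  assume a: "sheet W U g" "x \<in> W"
  have "\<forall>x\<in>W. g (\<rho> x) = x" using a(1) unfolding sheet_def by (elim conjE)
  then show ?thesis using a(2) by (rule bspec)
qed
lemma sheetD6: "sheet W U g \<Longrightarrow> y \<in> U \<Longrightarrow> \<rho> (g y) = y"
proof -
  assume a: "sheet W U g" "y \<in> U"
  have "\<forall>y\<in>U. \<rho> (g y) = y" using a(1) unfolding sheet_def by (elim conjE)
  then show ?thesis using a(2) by (rule bspec)
qed
lemmas sheetD = sheetD1 sheetD2 sheetD3 sheetD4 sheetD5 sheetD6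

lemma sheet_props:
  assumes "sheet W U g"
  shows "continuous_map (subtopology (fst E) W) (subtopology (fst B) U) \<rho>"
    "continuous_map (subtopology (fst B) U) (subtopology (fst E) W) g"
    "\<And>x. x \<in> W \<Longrightarrow> \<rho> x \<in> U" "\<And>y. y \<in> U \<Longrightarrow> g y \<in> W"
    "W \<subseteq> topspace (fst E)" "U \<subseteq> topspace (fst B)"
proof -
  note D = sheetD[OF assms]
  show c1: "continuous_map (subtopology (fst E) W) (subtopology (fst B) U) \<rho>"
    using stream_map_cont[OF D(3)] unfolding substream_def fst_conv .
  show c2: "continuous_map (subtopology (fst B) U) (subtopology (fst E) W) g"
    using stream_map_cont[OF D(4)] unfolding substream_def fst_conv .
  show sW: "W \<subseteq> topspace (fst E)" using D(1) by (rule openin_subset)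
  show sU: "U \<subseteq> topspace (fst B)" using D(2) by (rule openin_subset)
  show "\<rho> x \<in> U" if "x \<in> W" for x
  proof -
    have "\<rho> ` topspace (subtopology (fst E) W) \<subseteq> topspace (subtopology (fst B) U)"
      by (rule continuous_map_image_subset_topspace[OF c1])
    then show ?thesis unfolding top_sub_open[OF D(1)] top_sub_open[OF D(2)] using that by blast
  qed
  show "g y \<in> W" if "y \<in> U" for y
  proof -
    have "g ` topspace (subtopology (fst B) U) \<subseteq> topspace (subtopology (fst E) W)"
      by (rule continuous_map_image_subset_topspace[OF c2])
    then show ?thesis unfolding top_sub_open[OF D(1)] top_sub_open[OF D(2)] using that by blast
  qed
qed

lemma evenlyD:
  assumes "evenly U"
  obtains \<W> where "openin (fst B) U" "\<And>W. W \<in> \<W> \<Longrightarrow> openin (fst E) W" "pairwise disjnt \<W>"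
    "\<Union>\<W> = {x \<in> topspace (fst E). \<rho> x \<in> U}" "\<And>W. W \<in> \<W> \<Longrightarrow> \<exists>g. sheet W U g"
proof -
  have oU: "openin (fst B) U" using assms unfolding evenly_def by (rule conjunct1)
  have "\<exists>\<W>. (\<forall>W\<in>\<W>. openin (fst E) W) \<and>
            pairwise disjnt \<W> \<and> \<Union>\<W> = {x \<in> topspace (fst E). \<rho> x \<in> U} \<and>
            (\<forall>W\<in>\<W>. \<exists>g. sheet W U g)" using assms unfolding evenly_def by (rule conjunct2)
  then obtain \<W> where W1: "\<forall>W\<in>\<W>. openin (fst E) W" and W2: "pairwise disjnt \<W>"
    and W3: "\<Union>\<W> = {x \<in> topspace (fst E). \<rho> x \<in> U}" and W4: "\<forall>W\<in>\<W>. \<exists>g. sheet W U g"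
    by (elim exE conjE)
  show ?thesis
  proof (rule that[of \<W>])
    show "openin (fst B) U" by (rule oU)
    show "pairwise disjnt \<W>" by (rule W2)
    show "\<Union>\<W> = {x \<in> topspace (fst E). \<rho> x \<in> U}" by (rule W3)
    fix W assume "W \<in> \<W>"
    then show "openin (fst E) W" using W1 by blast
    show "\<exists>g. sheet W U g" using W4 \<open>W \<in> \<W>\<close> by blast
  qed
qed

lemma sheet_exists:
  assumes e: "e \<in> topspace (fst E)" shows "\<exists>W U g. sheet W U g \<and> e \<in> W"
proof -
  obtain U where U: "evenly U" "\<rho> e \<in> U" using evenly_cover[OF rho_top[OF e]] by blast
  obtain \<W> where W0: "openin (fst B) U" "\<And>W. W \<in> \<W> \<Longrightarrow> openin (fst E) W" "pairwise disjnt \<W>"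
    and W: "\<Union>\<W> = {x \<in> topspace (fst E). \<rho> x \<in> U}" "\<And>W. W \<in> \<W> \<Longrightarrow> \<exists>g. sheet W U g"
    by (rule evenlyD[OF U(1)]) blast
  have "e \<in> \<Union>\<W>" unfolding W(1) using e U(2) by (rule CollectI[of _ e, OF conjI])
  then obtain W where W': "W \<in> \<W>" "e \<in> W" by (rule UnionE)
  obtain g where "sheet W U g" using W(2)[OF W'(1)] by (elim exE)
  then show ?thesis using W'(2) by (intro exI conjI)
qed

lemma sheet_img_open:
  assumes sh: "sheet W U g" and V: "openin (fst E) V"
  shows "openin (fst B) {y \<in> U. g y \<in> W \<inter> V}"
proof -
  note D = sheetD[OF sh] and P = sheet_props[OF sh]
  have "openin (subtopology (fst E) W) (W \<inter> V)"
    using V by (simp add: openin_subtopology_Int2)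
  then have "openin (subtopology (fst B) U) {y \<in> topspace (subtopology (fst B) U). g y \<in> W \<inter> V}"
    using P(2) by (rule openin_continuous_map_preimage[rotated])
  then have "openin (subtopology (fst B) U) {y \<in> U. g y \<in> W \<inter> V}"
    unfolding top_sub_open[OF D(2)] .
  then show ?thesis using D(2) by (rule openin_trans_full)
qed

lemma mono_E: "openin (fst E) A \<Longrightarrow> openin (fst E) C \<Longrightarrow> A \<subseteq> C \<Longrightarrow> snd E A \<subseteq> snd E C"
  by (rule circ_mono[OF circE])

lemma openin_sub_of_open: "openin X U \<Longrightarrow> openin X V \<Longrightarrow> V \<subseteq> U \<Longrightarrow> openin (subtopology X U) V"
  by (simp add: openin_open_subtopology)

lemma sheet_rel_up:
  assumes sh: "sheet W U g" and V: "openin (fst E) V" and ab: "(a, b) \<in> snd E (W \<inter> V)"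
  shows "(\<rho> a, \<rho> b) \<in> snd B {y \<in> U. g y \<in> W \<inter> V}"
proof -
  note D = sheetD[OF sh] and P = sheet_props[OF sh]
  let ?V' = "{y \<in> U. g y \<in> W \<inter> V}"
  have o: "openin (fst (substream B U)) ?V'"
    unfolding substream_def fst_conv using D(2) sheet_img_open[OF sh V] by (rule openin_sub_of_open) blast
  have eq: "\<rho> -` ?V' \<inter> topspace (fst (substream E W)) = W \<inter> V"
    unfolding substream_def fst_conv top_sub_open[OF D(1)] using D(5) P(3) by auto
  have "(a, b) \<in> snd (substream E W) (W \<inter> V)" unfolding substream_def snd_conv by (rule ab)
  then have "(a, b) \<in> snd (substream E W) (\<rho> -` ?V' \<inter> topspace (fst (substream E W)))"
    by (simp only: eq)
  from stream_mapD[OF D(3) o this] show ?thesis unfolding substream_def snd_conv .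
qed

lemma sheet_rel_down:
  assumes sh: "sheet W U g" and V: "openin (fst B) V" and ab: "(a, b) \<in> snd B (U \<inter> V)"
  shows "(g a, g b) \<in> snd E {x \<in> W. \<rho> x \<in> U \<inter> V}"
proof -
  note D = sheetD[OF sh] and P = sheet_props[OF sh]
  let ?V' = "{x \<in> W. \<rho> x \<in> U \<inter> V}"
  have "openin (fst E) {x \<in> topspace (fst E). \<rho> x \<in> V}" using cont V by (rule openin_continuous_map_preimage)
  then have "openin (fst E) (W \<inter> {x \<in> topspace (fst E). \<rho> x \<in> V})" using D(1) by (intro openin_Int)
  moreover have "W \<inter> {x \<in> topspace (fst E). \<rho> x \<in> V} = ?V'" using P(3) P(5) by auto
  ultimately have o1: "openin (fst E) ?V'" by simp
  have o: "openin (fst (substream E W)) ?V'"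
    unfolding substream_def fst_conv using D(1) o1 by (rule openin_sub_of_open) blast
  have eq: "g -` ?V' \<inter> topspace (fst (substream B U)) = U \<inter> V"
    unfolding substream_def fst_conv top_sub_open[OF D(2)] using D(6) P(4) by auto
  have "(a, b) \<in> snd (substream B U) (U \<inter> V)" unfolding substream_def snd_conv by (rule ab)
  then have "(a, b) \<in> snd (substream B U) (g -` ?V' \<inter> topspace (fst (substream B U)))"
    by (simp only: eq)
  from stream_mapD[OF D(4) o this] show ?thesis unfolding substream_def snd_conv .
qed

end


lemma po_iff: "path_ordered X \<longleftrightarrow> (\<forall>V. openin (fst X) V \<longrightarrow> snd X V \<subseteq> PathRel X V)"
  unfolding path_ordered_def PathRel_def by fast

lemma PathRelI: "dipath X p \<Longrightarrow> p 0 = x \<Longrightarrow> p 1 = y \<Longrightarrow> p ` {0..1} \<subseteq> V \<Longrightarrow> (x, y) \<in> PathRel X V"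
  unfolding PathRel_def by blast

lemma PathRelE:
  assumes "(x, y) \<in> PathRel X V"
  obtains p where "dipath X p" "p 0 = x" "p 1 = y" "p ` {0..1} \<subseteq> V"
proof -
  have "\<exists>p. dipath X p \<and> p 0 = x \<and> p 1 = y \<and> p ` {0..1} \<subseteq> V" using assms unfolding PathRel_def by simp
  then show ?thesis using that by blast
qed

context scov
begin

lemma sheet_pre_open:
  assumes sh: "sheet W U g" and V: "openin (fst B) V"
  shows "openin (fst E) {x \<in> W. \<rho> x \<in> U \<inter> V}"
proof -
  note D = sheetD[OF sh] and P = sheet_props[OF sh]
  have "openin (fst E) {x \<in> topspace (fst E). \<rho> x \<in> V}" using cont V by (rule openin_continuous_map_preimage)
  then have "openin (fst E) (W \<inter> {x \<in> topspace (fst E). \<rho> x \<in> V})" using D(1) by (intro openin_Int)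
  moreover have "W \<inter> {x \<in> topspace (fst E). \<rho> x \<in> V} = {x \<in> W. \<rho> x \<in> U \<inter> V}" using P(3) P(5) by auto
  ultimately show ?thesis by simp
qed

lemma sheet_lift_dipath:
  assumes sh: "sheet W U g" and q: "dipath B q" and qU: "\<And>t. t \<in> {0..1} \<Longrightarrow> q t \<in> U"
  shows "dipath E (g \<circ> q)"
proof (rule dipathI)
  note D = sheetD[OF sh] and P = sheet_props[OF sh]
  have "continuous_map (top_of_set {0..1}) (subtopology (fst B) U) q"
    unfolding continuous_map_in_subtopology using dipath_cont[OF q] qU by (auto simp: Pi_iff)
  then have "continuous_map (top_of_set {0..1}) (subtopology (fst E) W) (g \<circ> q)"
    using P(2) by (rule continuous_map_compose)
  then show "continuous_map (top_of_set {0..1}) (fst E) (g \<circ> q)"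
    unfolding continuous_map_in_subtopology by (rule conjunct1)
  fix V3 and s t :: real assume V3: "openin (fst E) V3" and st: "s \<le> t" "{s..t} \<subseteq> {0..1}"
    and hu: "\<And>u. u \<in> {s..t} \<Longrightarrow> (g \<circ> q) u \<in> V3"
  let ?V' = "{y \<in> U. g y \<in> W \<inter> V3}"
  have oV': "openin (fst B) ?V'" by (rule sheet_img_open[OF sh V3])
  have "(q s, q t) \<in> snd B ?V'"
  proof (rule dipathD[OF q oV' st])
    fix u assume u: "u \<in> {s..t}"
    then have "u \<in> {0..1}" using st(2) by blast
    then have "q u \<in> U" by (rule qU)
    moreover have "g (q u) \<in> W" using P(4) \<open>q u \<in> U\<close> .
    moreover have "g (q u) \<in> V3" using hu[OF u] by simp
    ultimately show "q u \<in> ?V'" by blast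
  qed
  moreover have "U \<inter> ?V' = ?V'" by blast
  ultimately have "(q s, q t) \<in> snd B (U \<inter> ?V')" by simp
  then have "(g (q s), g (q t)) \<in> snd E {x \<in> W. \<rho> x \<in> U \<inter> ?V'}"
    by (rule sheet_rel_down[OF sh oV'])
  moreover have "snd E {x \<in> W. \<rho> x \<in> U \<inter> ?V'} \<subseteq> snd E V3"
  proof (rule mono_E)
    show "openin (fst E) {x \<in> W. \<rho> x \<in> U \<inter> ?V'}" by (rule sheet_pre_open[OF sh oV'])
    show "openin (fst E) V3" by (rule V3)
    show "{x \<in> W. \<rho> x \<in> U \<inter> ?V'} \<subseteq> V3"
    proof
      fix x assume "x \<in> {x \<in> W. \<rho> x \<in> U \<inter> ?V'}"
      then have "x \<in> W" "g (\<rho> x) \<in> V3" by auto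
      then show "x \<in> V3" using D(5) by simp
    qed
  qed
  ultimately show "((g \<circ> q) s, (g \<circ> q) t) \<in> snd E V3" by auto
qed

lemma po_B_E: assumes po: "path_ordered B" shows "path_ordered E"
  unfolding po_iff
proof (intro allI impI)
  fix V assume V: "openin (fst E) V"
  define \<Q> where "\<Q> = (\<lambda>W. W \<inter> V) ` {W. \<exists>U g. sheet W U g}"
  have UO: "\<Union>\<Q> = V"
  proof
    show "\<Union>\<Q> \<subseteq> V" unfolding \<Q>_def by blast
    show "V \<subseteq> \<Union>\<Q>"
    proof
      fix e assume e: "e \<in> V"
      then have "e \<in> topspace (fst E)" using openin_subset[OF V] by blast
      then obtain W U g where "sheet W U g" "e \<in> W" using sheet_exists by blast
      then show "e \<in> \<Union>\<Q>" unfolding \<Q>_def using e by blast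
    qed
  qed
  have oO: "\<forall>Q\<in>\<Q>. openin (fst E) Q"
    unfolding \<Q>_def using V sheetD1 by blast
  have pre: "preorder_graph (\<Union>\<Q>) (PathRel E V)" unfolding UO by (rule PathRel_preorder[OF isE V])
  have sub: "\<forall>Q\<in>\<Q>. snd E Q \<subseteq> PathRel E V"
  proof
    fix Q assume "Q \<in> \<Q>"
    then obtain W U g where sh: "sheet W U g" and Q: "Q = W \<inter> V" unfolding \<Q>_def by blast
    note D = sheetD[OF sh] and P = sheet_props[OF sh]
    show "snd E Q \<subseteq> PathRel E V"
    proof
      fix z assume z: "z \<in> snd E Q"
      obtain a b where zab: "z = (a, b)" by (cases z)
      have ab: "(a, b) \<in> snd E (W \<inter> V)" using z unfolding zab Q .
      have "preorder_graph (W \<inter> V) (snd E (W \<inter> V))" using circE by (rule circ_pre) (intro openin_Int D(1) V)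
      then have aW: "a \<in> W \<inter> V" "b \<in> W \<inter> V" using ab unfolding preorder_graph_def by blast+
      let ?V' = "{y \<in> U. g y \<in> W \<inter> V}"
      have "(\<rho> a, \<rho> b) \<in> snd B ?V'" by (rule sheet_rel_up[OF sh V ab])
      moreover have "openin (fst B) ?V'" by (rule sheet_img_open[OF sh V])
      ultimately obtain q where q: "dipath B q" "q 0 = \<rho> a" "q 1 = \<rho> b" "q ` {0..1} \<subseteq> ?V'"
        using po unfolding path_ordered_def by blast
      have qU: "\<And>t. t \<in> {0..1} \<Longrightarrow> q t \<in> U" using q(4) by blast
      have "dipath E (g \<circ> q)" by (rule sheet_lift_dipath[OF sh q(1) qU])
      moreover have "(g \<circ> q) 0 = a" using q(2) D(5) aW by simp
      moreover have "(g \<circ> q) 1 = b" using q(3) D(5) aW by simp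
      moreover have "(g \<circ> q) ` {0..1} \<subseteq> V" using q(4) by auto
      ultimately show "z \<in> PathRel E V" unfolding zab by (rule PathRelI)
    qed
  qed
  have "snd E (\<Union>\<Q>) \<subseteq> PathRel E V" by (rule circ_cover[OF circE oO pre sub])
  then show "snd E V \<subseteq> PathRel E V" unfolding UO .
qed

lemma po_E_B: assumes po: "path_ordered E" shows "path_ordered B"
  unfolding po_iff
proof (intro allI impI)
  fix V assume V: "openin (fst B) V"
  define \<Q> where "\<Q> = (\<lambda>U. U \<inter> V) ` {U. \<exists>W g. sheet W U g}"
  have UO: "\<Union>\<Q> = V"
  proof
    show "\<Union>\<Q> \<subseteq> V" unfolding \<Q>_def by blast
    show "V \<subseteq> \<Union>\<Q>"
    proof
      fix b assume b: "b \<in> V"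
      then have "b \<in> topspace (fst B)" using openin_subset[OF V] by blast
      then obtain e where e: "e \<in> topspace (fst E)" "b = \<rho> e" using surj by blast
      then obtain W U g where sh: "sheet W U g" "e \<in> W" using sheet_exists by blast
      then have "b \<in> U" using sheet_props(3)[OF sh(1)] e(2) by simp
      then show "b \<in> \<Union>\<Q>" unfolding \<Q>_def using b sh(1) by blast
    qed
  qed
  have oO: "\<forall>Q\<in>\<Q>. openin (fst B) Q"
    unfolding \<Q>_def using V sheetD2 by blast
  have pre: "preorder_graph (\<Union>\<Q>) (PathRel B V)" unfolding UO by (rule PathRel_preorder[OF isB V])
  have sub: "\<forall>Q\<in>\<Q>. snd B Q \<subseteq> PathRel B V"
  proof
    fix Q assume "Q \<in> \<Q>"
    then obtain W U g where sh: "sheet W U g" and Q: "Q = U \<inter> V" unfolding \<Q>_def by blast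
    note D = sheetD[OF sh] and P = sheet_props[OF sh]
    show "snd B Q \<subseteq> PathRel B V"
    proof
      fix z assume z: "z \<in> snd B Q"
      obtain a b where zab: "z = (a, b)" by (cases z)
      have ab: "(a, b) \<in> snd B (U \<inter> V)" using z unfolding zab Q .
      have "preorder_graph (U \<inter> V) (snd B (U \<inter> V))" using circB by (rule circ_pre) (intro openin_Int D(2) V)
      then have aU: "a \<in> U \<inter> V" "b \<in> U \<inter> V" using ab unfolding preorder_graph_def by blast+
      let ?V' = "{x \<in> W. \<rho> x \<in> U \<inter> V}"
      have "(g a, g b) \<in> snd E ?V'" by (rule sheet_rel_down[OF sh V ab])
      moreover have "openin (fst E) ?V'" by (rule sheet_pre_open[OF sh V])
      ultimately obtain p where p: "dipath E p" "p 0 = g a" "p 1 = g b" "p ` {0..1} \<subseteq> ?V'"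
        using po unfolding path_ordered_def by blast
      have "dipath B (\<rho> \<circ> p)" using p(1) smap by (rule dipath_comp)
      moreover have "(\<rho> \<circ> p) 0 = a" using p(2) D(6) aU by simp
      moreover have "(\<rho> \<circ> p) 1 = b" using p(3) D(6) aU by simp
      moreover have "(\<rho> \<circ> p) ` {0..1} \<subseteq> V" using p(4) by auto
      ultimately show "z \<in> PathRel B V" unfolding zab by (rule PathRelI)
    qed
  qed
  have "snd B (\<Union>\<Q>) \<subseteq> PathRel B V" by (rule circ_cover[OF circB oO pre sub])
  then show "snd B V \<subseteq> PathRel B V" unfolding UO .
qed

end


context scov
begin

lemma rel_lift:
  assumes sh: "sheet W U g" and V: "openin (fst E) V"
    and yy: "(y1, y2) \<in> snd B {y \<in> U. g y \<in> W \<inter> V}"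
  shows "(g y1, g y2) \<in> snd E V"
proof -
  note D = sheetD[OF sh] and P = sheet_props[OF sh]
  let ?V' = "{y \<in> U. g y \<in> W \<inter> V}"
  have oV': "openin (fst B) ?V'" by (rule sheet_img_open[OF sh V])
  have "U \<inter> ?V' = ?V'" by blast
  then have "(y1, y2) \<in> snd B (U \<inter> ?V')" using yy by simp
  then have "(g y1, g y2) \<in> snd E {x \<in> W. \<rho> x \<in> U \<inter> ?V'}"
    by (rule sheet_rel_down[OF sh oV'])
  moreover have "snd E {x \<in> W. \<rho> x \<in> U \<inter> ?V'} \<subseteq> snd E V"
  proof (rule mono_E)
    show "openin (fst E) {x \<in> W. \<rho> x \<in> U \<inter> ?V'}" by (rule sheet_pre_open[OF sh oV'])
    show "openin (fst E) V" by (rule V)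
    show "{x \<in> W. \<rho> x \<in> U \<inter> ?V'} \<subseteq> V"
    proof
      fix x assume "x \<in> {x \<in> W. \<rho> x \<in> U \<inter> ?V'}"
      then have "x \<in> W" "g (\<rho> x) \<in> V" by auto
      then show "x \<in> V" using D(5) by simp
    qed
  qed
  ultimately show ?thesis by blast
qed

lemma lift_unique:
  assumes conn: "connected_space X" and f1: "continuous_map X (fst E) f1"
    and f2: "continuous_map X (fst E) f2"
    and eq: "\<And>x. x \<in> topspace X \<Longrightarrow> \<rho> (f1 x) = \<rho> (f2 x)"
    and x0: "x0 \<in> topspace X" "f1 x0 = f2 x0"
  shows "\<forall>x\<in>topspace X. f1 x = f2 x"
proof -
  define T where "T = {x \<in> topspace X. f1 x = f2 x}"
  have key: "\<exists>N. openin X N \<and> x \<in> N \<and> (f1 x = f2 x \<longrightarrow> N \<subseteq> T) \<and> (f1 x \<noteq> f2 x \<longrightarrow> N \<inter> T = {})"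
    if x: "x \<in> topspace X" for x
  proof -
    have f1x: "f1 x \<in> topspace (fst E)" using continuous_map_image_subset_topspace[OF f1] x by blast
    have f2x: "f2 x \<in> topspace (fst E)" using continuous_map_image_subset_topspace[OF f2] x by blast
    obtain U where U: "evenly U" "\<rho> (f1 x) \<in> U" using evenly_cover[OF rho_top[OF f1x]] by blast
    obtain \<W> where W0: "openin (fst B) U" "\<And>W. W \<in> \<W> \<Longrightarrow> openin (fst E) W" "pairwise disjnt \<W>"
      and W: "\<Union>\<W> = {x \<in> topspace (fst E). \<rho> x \<in> U}" "\<And>W. W \<in> \<W> \<Longrightarrow> \<exists>g. sheet W U g"
      by (rule evenlyD[OF U(1)]) blast
    have "f1 x \<in> \<Union>\<W>" unfolding W(1) using f1x U(2) by blast
    then obtain W1 where W1: "W1 \<in> \<W>" "f1 x \<in> W1" by (rule UnionE)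
    have "f2 x \<in> \<Union>\<W>" unfolding W(1) using f2x U(2) eq[OF x] by simp
    then obtain W2 where W2: "W2 \<in> \<W>" "f2 x \<in> W2" by (rule UnionE)
    obtain g1 where g1: "sheet W1 U g1" using W(2)[OF W1(1)] by (elim exE)
    obtain g2 where g2: "sheet W2 U g2" using W(2)[OF W2(1)] by (elim exE)
    define N where "N = {y \<in> topspace X. f1 y \<in> W1} \<inter> {y \<in> topspace X. f2 y \<in> W2}"
    have oN: "openin X N" unfolding N_def
      by (intro openin_Int openin_continuous_map_preimage[OF f1] openin_continuous_map_preimage[OF f2] W0(2) W1(1) W2(1))
    have xN: "x \<in> N" unfolding N_def using x W1 W2 by blast
    have c1: "N \<subseteq> T" if "f1 x = f2 x"
    proof -
      have "W1 = W2"
      proof (rule ccontr)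
        assume "W1 \<noteq> W2"
        then have "disjnt W1 W2" using W0(3) W1(1) W2(1) unfolding pairwise_def by blast
        then show False using W1(2) W2(2) that unfolding disjnt_def by auto
      qed
      show ?thesis
      proof
        fix y assume y: "y \<in> N"
        then have y1: "f1 y \<in> W1" and y2: "f2 y \<in> W1" and yX: "y \<in> topspace X"
          unfolding N_def using \<open>W1 = W2\<close> by auto
        have "f1 y = g1 (\<rho> (f1 y))" using sheetD5[OF g1 y1] by simp
        also have "\<dots> = g1 (\<rho> (f2 y))" using eq[OF yX] by simp
        also have "\<dots> = f2 y" using sheetD5[OF g1 y2] .
        finally show "y \<in> T" unfolding T_def using yX by simp
      qed
    qed
    have c2: "N \<inter> T = {}" if "f1 x \<noteq> f2 x"
    proof -
      have "W1 \<noteq> W2"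
      proof
        assume "W1 = W2"
        have "f1 x = g1 (\<rho> (f1 x))" using sheetD5[OF g1 W1(2)] by simp
        also have "\<dots> = g1 (\<rho> (f2 x))" using eq[OF x] by simp
        also have "\<dots> = f2 x" using sheetD5[OF g1] W2(2) \<open>W1 = W2\<close> by simp
        finally show False using that by simp
      qed
      then have "disjnt W1 W2" using W0(3) W1(1) W2(1) unfolding pairwise_def by blast
      then show ?thesis unfolding N_def T_def disjnt_def by auto
    qed
    show ?thesis using oN xN c1 c2 by blast
  qed
  have oT: "openin X T"
    unfolding openin_subopen[of X T]
  proof
    fix x assume "x \<in> T"
    then have x: "x \<in> topspace X" "f1 x = f2 x" unfolding T_def by auto
    then show "\<exists>N. openin X N \<and> x \<in> N \<and> N \<subseteq> T" using key[OF x(1)] by blast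
  qed
  have cT: "openin X (topspace X - T)"
    unfolding openin_subopen[of X "topspace X - T"]
  proof
    fix x assume "x \<in> topspace X - T"
    then have x: "x \<in> topspace X" "f1 x \<noteq> f2 x" unfolding T_def by auto
    then obtain N where N: "openin X N" "x \<in> N" "N \<inter> T = {}" using key[OF x(1)] by blast
    have "N \<subseteq> topspace X" using N(1) by (rule openin_subset)
    then show "\<exists>N. openin X N \<and> x \<in> N \<and> N \<subseteq> topspace X - T" using N by blast
  qed
  have "closedin X T" unfolding closedin_def using cT T_def by auto
  then have "T = {} \<or> T = topspace X" using conn oT unfolding connected_space_clopen_in by blast
  moreover have "x0 \<in> T" unfolding T_def using x0 by simp
  ultimately have "T = topspace X" by blast
  then show ?thesis unfolding T_def by blast
qed

lemma lift_dipath: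
  assumes cp: "continuous_map (top_of_set {0..1}) (fst E) p'" and p: "dipath B p"
    and lift: "\<And>t. t \<in> {0..1} \<Longrightarrow> \<rho> (p' t) = p t"
  shows "dipath E p'"
proof (rule dipathI[OF cp])
  fix V and s t :: real assume V: "openin (fst E) V" and st: "s \<le> t" "{s..t} \<subseteq> {0..1}"
    and hu: "\<And>u. u \<in> {s..t} \<Longrightarrow> p' u \<in> V"
  have pre: "preorder_graph V (snd E V)" using circE V by (rule circ_pre)
  have local: "(p' a, p' b) \<in> snd E V"
    if ab: "s \<le> a" "a \<le> b" "b \<le> t" and sh: "sheet W U g" and inW: "\<And>u. u \<in> {a..b} \<Longrightarrow> p' u \<in> W"
    for a b W U g
  proof -
    note D = sheetD[OF sh] and P = sheet_props[OF sh]
    let ?V' = "{y \<in> U. g y \<in> W \<inter> V}"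
    have oV': "openin (fst B) ?V'" by (rule sheet_img_open[OF sh V])
    have sub: "{a..b} \<subseteq> {0..1}" using ab st by auto
    have "(p a, p b) \<in> snd B ?V'"
    proof (rule dipathD[OF p oV' ab(2) sub])
      fix u assume u: "u \<in> {a..b}"
      have u01: "u \<in> {0..1}" using u sub by blast
      have uw: "p' u \<in> W" by (rule inW[OF u])
      have uv: "p' u \<in> V" using hu u ab by auto
      have "p u = \<rho> (p' u)" using lift[OF u01] by simp
      then show "p u \<in> ?V'" using P(3)[OF uw] D(5)[OF uw] uw uv by simp
    qed
    then have "(g (p a), g (p b)) \<in> snd E V" by (rule rel_lift[OF sh V])
    moreover have "g (p a) = p' a"
    proof -
      have "a \<in> {a..b}" using ab by simp
      then have "p' a \<in> W" by (rule inW)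
      moreover have "a \<in> {0..1}" using sub ab by auto
      ultimately show ?thesis using lift D(5) by metis
    qed
    moreover have "g (p b) = p' b"
    proof -
      have "b \<in> {a..b}" using ab by simp
      then have "p' b \<in> W" by (rule inW)
      moreover have "b \<in> {0..1}" using sub ab by auto
      ultimately show ?thesis using lift D(5) by metis
    qed
    ultimately show ?thesis by simp
  qed
  define \<C> where "\<C> = {Ob. open Ob \<and> (\<exists>W U g. sheet W U g \<and> (\<forall>u\<in>{0..1} \<inter> Ob. p' u \<in> W))}"
  have cover: "{s..t} \<subseteq> \<Union>\<C>"
  proof
    fix u assume u: "u \<in> {s..t}"
    then have u01: "u \<in> {0..1}" using st by blast
    have "p' u \<in> topspace (fst E)" using continuous_map_image_subset_topspace[OF cp] u01 by auto
    then obtain W U g where sh: "sheet W U g" "p' u \<in> W" using sheet_exists by blast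
    have "openin (top_of_set {0..1}) {v \<in> topspace (top_of_set {0..1}). p' v \<in> W}"
      using cp sheetD1[OF sh(1)] by (rule openin_continuous_map_preimage)
    then obtain Ob where Ob: "open Ob" "{v \<in> {0..1}. p' v \<in> W} = {0..1} \<inter> Ob"
      unfolding topspace_euclidean_subtopology openin_open by blast
    have "u \<in> Ob" using Ob(2) u01 sh(2) by blast
    moreover have "Ob \<in> \<C>" unfolding \<C>_def using Ob sh(1) by blast
    ultimately show "u \<in> \<Union>\<C>" by blast
  qed
  have Cne: "\<C> \<noteq> {}" using cover st(1) by auto
  have Copen: "\<And>Ob. Ob \<in> \<C> \<Longrightarrow> open Ob" unfolding \<C>_def by blast
  obtain \<delta> where d: "0 < \<delta>" "\<And>T. T \<subseteq> {s..t} \<Longrightarrow> diameter T < \<delta> \<Longrightarrow> \<exists>Ob \<in> \<C>. T \<subseteq> Ob"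
    using Lebesgue_number_lemma[OF compact_Icc Cne cover Copen] by blast
  have step: "(p' c, p' b) \<in> snd E V" if "s \<le> c" "c \<le> b" "b \<le> t" "b - c < \<delta>" for c b
  proof -
    have "diameter {c..b} < \<delta>" using that by simp
    moreover have "{c..b} \<subseteq> {s..t}" using that by auto
    ultimately obtain Ob where Ob: "Ob \<in> \<C>" "{c..b} \<subseteq> Ob" using d(2) by blast
    then obtain W U g where sh: "sheet W U g" and inW: "\<forall>u\<in>{0..1} \<inter> Ob. p' u \<in> W"
      unfolding \<C>_def by blast
    have "\<And>u. u \<in> {c..b} \<Longrightarrow> p' u \<in> W" using inW Ob(2) \<open>{c..b} \<subseteq> {s..t}\<close> st(2) by blast
    then show ?thesis using local[OF that(1,2,3) sh] by blast
  qed
  have ind: "\<forall>b. s \<le> b \<and> b \<le> t \<and> b - s \<le> real n * (\<delta>/2) \<longrightarrow> (p' s, p' b) \<in> snd E V" for n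
  proof (induction n)
    case 0
    show ?case
    proof (intro allI impI)
      fix b assume "s \<le> b \<and> b \<le> t \<and> b - s \<le> real 0 * (\<delta> / 2)"
      then have "b = s" by simp
      moreover have "p' s \<in> V" using hu st(1) by simp
      ultimately show "(p' s, p' b) \<in> snd E V" using pre unfolding preorder_graph_def by blast
    qed
  next
    case (Suc n)
    show ?case
    proof (intro allI impI)
      fix b assume b: "s \<le> b \<and> b \<le> t \<and> b - s \<le> real (Suc n) * (\<delta> / 2)"
      show "(p' s, p' b) \<in> snd E V"
      proof (cases "b - s \<le> real n * (\<delta> / 2)")
        case True then show ?thesis using Suc.IH b by blast
      next
        case False
        define c where "c = s + real n * (\<delta> / 2)"
        have c: "s \<le> c" "c \<le> b" "b - c < \<delta>" using False b d(1) unfolding c_def by (auto simp: algebra_simps)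
        have "(p' s, p' c) \<in> snd E V" using Suc.IH c b unfolding c_def by auto
        moreover have "(p' c, p' b) \<in> snd E V" using step c b by blast
        ultimately show ?thesis using pre unfolding preorder_graph_def trans_def by blast
      qed
    qed
  qed
  obtain n where "t - s < real n * (\<delta>/2)" using ex_less_of_nat_mult[of "\<delta>/2" "t - s"] d(1) by auto
  then show "(p' s, p' t) \<in> snd E V" using ind[of n] st(1) by auto
qed

end


lemma cont_restrict:
  assumes "continuous_map (top_of_set A) Y f" "C \<subseteq> A"
  shows "continuous_map (top_of_set C) Y f"
proof -
  have "continuous_map (subtopology (top_of_set A) C) Y f" using assms(1) by (rule continuous_map_from_subtopology)
  moreover have "subtopology (top_of_set A) C = top_of_set C"
    unfolding subtopology_subtopology using assms(2) by (simp add: Int_absorb1)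
  ultimately show ?thesis by simp
qed

context scov
begin

definition LP :: "(real \<times> real \<Rightarrow> 'b) \<Rightarrow> (real \<times> real) set \<Rightarrow> bool" where
  "LP H Q \<longleftrightarrow> (\<forall>q0\<in>Q. \<forall>e\<in>topspace (fst E). \<rho> e = H q0 \<longrightarrow>
     (\<exists>f. continuous_map (top_of_set Q) (fst E) f \<and> (\<forall>q\<in>Q. \<rho> (f q) = H q) \<and> f q0 = e))"

lemma LPI:
  assumes "\<And>q0 e. q0 \<in> Q \<Longrightarrow> e \<in> topspace (fst E) \<Longrightarrow> \<rho> e = H q0 \<Longrightarrow>
     \<exists>f. continuous_map (top_of_set Q) (fst E) f \<and> (\<forall>q\<in>Q. \<rho> (f q) = H q) \<and> f q0 = e"
  shows "LP H Q"
  unfolding LP_def using assms by blast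

lemma LPE:
  assumes "LP H Q" "q0 \<in> Q" "e \<in> topspace (fst E)" "\<rho> e = H q0"
  obtains f where "continuous_map (top_of_set Q) (fst E) f" "\<And>q. q \<in> Q \<Longrightarrow> \<rho> (f q) = H q" "f q0 = e"
proof -
  have "\<forall>q0\<in>Q. \<forall>e\<in>topspace (fst E). \<rho> e = H q0 \<longrightarrow>
     (\<exists>f. continuous_map (top_of_set Q) (fst E) f \<and> (\<forall>q\<in>Q. \<rho> (f q) = H q) \<and> f q0 = e)"
    using assms(1) unfolding LP_def .
  then have "\<exists>f. continuous_map (top_of_set Q) (fst E) f \<and> (\<forall>q\<in>Q. \<rho> (f q) = H q) \<and> f q0 = e"
    using assms(2-4) by blast
  then show ?thesis using that by blast
qed

lemma LP_small:
  assumes U: "evenly U" and HU: "\<And>q. q \<in> Q \<Longrightarrow> H q \<in> U" and cH: "continuous_map (top_of_set Q) (fst B) H"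
  shows "LP H Q"
proof (rule LPI)
  fix q0 e assume q0: "q0 \<in> Q" and e: "e \<in> topspace (fst E)" and eq: "\<rho> e = H q0"
  obtain \<W> where W0: "openin (fst B) U" "\<And>W. W \<in> \<W> \<Longrightarrow> openin (fst E) W" "pairwise disjnt \<W>"
    and W: "\<Union>\<W> = {x \<in> topspace (fst E). \<rho> x \<in> U}" "\<And>W. W \<in> \<W> \<Longrightarrow> \<exists>g. sheet W U g"
    by (rule evenlyD[OF U]) blast
  have "e \<in> \<Union>\<W>" unfolding W(1) using e eq HU[OF q0] by simp
  then obtain W where W1: "W \<in> \<W>" "e \<in> W" by (rule UnionE)
  obtain g where sh: "sheet W U g" using W(2)[OF W1(1)] by (elim exE)
  note D = sheetD[OF sh] and P = sheet_props[OF sh]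
  have "continuous_map (top_of_set Q) (subtopology (fst B) U) H"
    unfolding continuous_map_in_subtopology using cH HU by (auto simp: Pi_iff)
  then have "continuous_map (top_of_set Q) (subtopology (fst E) W) (g \<circ> H)"
    using P(2) by (rule continuous_map_compose)
  then have c: "continuous_map (top_of_set Q) (fst E) (g \<circ> H)"
    unfolding continuous_map_in_subtopology by (rule conjunct1)
  have l: "\<forall>q\<in>Q. \<rho> ((g \<circ> H) q) = H q" using D(6) HU by simp
  have "(g \<circ> H) q0 = e" using eq[symmetric] D(5)[OF W1(2)] by simp
  then show "\<exists>f. continuous_map (top_of_set Q) (fst E) f \<and> (\<forall>q\<in>Q. \<rho> (f q) = H q) \<and> f q0 = e"
    using c l by blast
qed

lemma LP_glue_aux:
  assumes cl1: "closed Q1" and cl2: "closed Q2" and conn: "connected (Q1 \<inter> Q2)" and ne: "Q1 \<inter> Q2 \<noteq> {}"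
    and L1: "LP H Q1" and L2: "LP H Q2"
    and q0: "q0 \<in> Q1" and e: "e \<in> topspace (fst E)" and eq: "\<rho> e = H q0"
  shows "\<exists>f. continuous_map (top_of_set (Q1 \<union> Q2)) (fst E) f \<and> (\<forall>q\<in>Q1 \<union> Q2. \<rho> (f q) = H q) \<and> f q0 = e"
proof -
  obtain f1 where f1: "continuous_map (top_of_set Q1) (fst E) f1" "\<And>q. q \<in> Q1 \<Longrightarrow> \<rho> (f1 q) = H q" "f1 q0 = e"
    by (rule LPE[OF L1 q0 e eq]) blast
  obtain q1 where q1: "q1 \<in> Q1 \<inter> Q2" using ne by blast
  have f1q1: "f1 q1 \<in> topspace (fst E)" using continuous_map_image_subset_topspace[OF f1(1)] q1 by auto
  have eq1: "\<rho> (f1 q1) = H q1" using f1(2) q1 by blast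
  have q1Q2: "q1 \<in> Q2" using q1 by blast
  obtain f2 where f2: "continuous_map (top_of_set Q2) (fst E) f2" "\<And>q. q \<in> Q2 \<Longrightarrow> \<rho> (f2 q) = H q" "f2 q1 = f1 q1"
    by (rule LPE[OF L2 q1Q2 f1q1 eq1]) blast
  have agree: "\<forall>x\<in>topspace (top_of_set (Q1 \<inter> Q2)). f1 x = f2 x"
  proof (rule lift_unique)
    show "connected_space (top_of_set (Q1 \<inter> Q2))"
      by (rule connected_space_subtopology) (simp add: connectedin_iff_connected conn)
    show "continuous_map (top_of_set (Q1 \<inter> Q2)) (fst E) f1" using f1(1) by (rule cont_restrict) blast
    show "continuous_map (top_of_set (Q1 \<inter> Q2)) (fst E) f2" using f2(1) by (rule cont_restrict) blast
    show "\<And>x. x \<in> topspace (top_of_set (Q1 \<inter> Q2)) \<Longrightarrow> \<rho> (f1 x) = \<rho> (f2 x)" using f1(2) f2(2) by simp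
    show "q1 \<in> topspace (top_of_set (Q1 \<inter> Q2))" using q1 by simp
    show "f1 q1 = f2 q1" using f2(3) by simp
  qed
  define f where "f = (\<lambda>q. if q \<in> Q1 then f1 q else f2 q)"
  have cf: "continuous_map (top_of_set (Q1 \<union> Q2)) (fst E) f"
  proof (rule pasting_lemma_closed[where I="{True, False}" and T="\<lambda>i. if i then Q1 else Q2"
        and f="\<lambda>i. if i then f1 else f2"])
    show "finite {True, False}" by simp
    fix i assume i: "i \<in> {True, False}"
    show "closedin (top_of_set (Q1 \<union> Q2)) (if i then Q1 else Q2)"
    proof (cases i)
      case True
      have "closedin (top_of_set (Q1 \<union> Q2)) ((Q1 \<union> Q2) \<inter> Q1)" using cl1 by (rule closedin_closed_Int)
      moreover have "(Q1 \<union> Q2) \<inter> Q1 = Q1" by blast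
      ultimately show ?thesis using True by simp
    next
      case False
      have "closedin (top_of_set (Q1 \<union> Q2)) ((Q1 \<union> Q2) \<inter> Q2)" using cl2 by (rule closedin_closed_Int)
      moreover have "(Q1 \<union> Q2) \<inter> Q2 = Q2" by blast
      ultimately show ?thesis using False by simp
    qed
    show "continuous_map (subtopology (top_of_set (Q1 \<union> Q2)) (if i then Q1 else Q2)) (fst E) (if i then f1 else f2)"
    proof (cases i)
      case True
      have "subtopology (top_of_set (Q1 \<union> Q2)) Q1 = top_of_set Q1"
        unfolding subtopology_subtopology by (simp add: Int_absorb1)
      then show ?thesis using True f1(1) by simp
    next
      case False
      have "subtopology (top_of_set (Q1 \<union> Q2)) Q2 = top_of_set Q2"
        unfolding subtopology_subtopology by (simp add: Int_absorb1)
      then show ?thesis using False f2(1) by simp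
    qed
  next
    fix i j x assume "i \<in> {True, False}" "j \<in> {True, False}"
      and x: "x \<in> topspace (top_of_set (Q1 \<union> Q2)) \<inter> (if i then Q1 else Q2) \<inter> (if j then Q1 else Q2)"
    show "(if i then f1 else f2) x = (if j then f1 else f2) x"
    proof (cases "i = j")
      case True then show ?thesis by simp
    next
      case False
      then have "x \<in> Q1 \<inter> Q2" using x by (cases i; cases j) auto
      then have "f1 x = f2 x" using agree by simp
      then show ?thesis by (cases i; cases j) auto
    qed
  next
    fix x assume x: "x \<in> topspace (top_of_set (Q1 \<union> Q2))"
    show "\<exists>j. j \<in> {True, False} \<and> x \<in> (if j then Q1 else Q2) \<and> f x = (if j then f1 else f2) x"
    proof (cases "x \<in> Q1")
      case True then show ?thesis unfolding f_def by (intro exI[of _ True]) simp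
    next
      case False then have "x \<in> Q2" using x by simp
      then show ?thesis unfolding f_def using False by (intro exI[of _ False]) simp
    qed
  qed
  have lf: "\<forall>q\<in>Q1 \<union> Q2. \<rho> (f q) = H q" unfolding f_def using f1(2) f2(2) by auto
  have "f q0 = e" unfolding f_def using q0 f1(3) by simp
  then show ?thesis using cf lf by blast
qed

lemma LP_glue:
  assumes cl1: "closed Q1" and cl2: "closed Q2" and conn: "connected (Q1 \<inter> Q2)" and ne: "Q1 \<inter> Q2 \<noteq> {}"
    and L1: "LP H Q1" and L2: "LP H Q2"
  shows "LP H (Q1 \<union> Q2)"
proof (rule LPI)
  fix q0 e assume q0: "q0 \<in> Q1 \<union> Q2" and e: "e \<in> topspace (fst E)" and eq: "\<rho> e = H q0"
  show "\<exists>f. continuous_map (top_of_set (Q1 \<union> Q2)) (fst E) f \<and> (\<forall>q\<in>Q1 \<union> Q2. \<rho> (f q) = H q) \<and> f q0 = e"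
  proof (cases "q0 \<in> Q1")
    case True then show ?thesis using LP_glue_aux[OF cl1 cl2 conn ne L1 L2 True e eq] by blast
  next
    case False then have q2: "q0 \<in> Q2" using q0 by blast
    have c': "connected (Q2 \<inter> Q1)" using conn by (simp add: Int_commute)
    have n': "Q2 \<inter> Q1 \<noteq> {}" using ne by blast
    have "\<exists>f. continuous_map (top_of_set (Q2 \<union> Q1)) (fst E) f \<and> (\<forall>q\<in>Q2 \<union> Q1. \<rho> (f q) = H q) \<and> f q0 = e"
      by (rule LP_glue_aux[OF cl2 cl1 c' n' L2 L1 q2 e eq])
    then show ?thesis by (simp add: Un_commute)
  qed
qed

end


context scov
begin

lemma LP_square:
  assumes cH: "continuous_map (top_of_set ({0..1}\<times>{0..1})) (fst B) H"
  shows "LP H ({0..1}\<times>{0..1})"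
proof -
  define S :: "(real \<times> real) set" where "S = {0..1}\<times>{0..1}"
  define \<C> where "\<C> = {Ob. open Ob \<and> (\<exists>U. evenly U \<and> (\<forall>q\<in>S \<inter> Ob. H q \<in> U))}"
  have cH': "continuous_map (top_of_set S) (fst B) H" using cH unfolding S_def .
  have cover: "S \<subseteq> \<Union>\<C>"
  proof
    fix q assume q: "q \<in> S"
    have "H q \<in> topspace (fst B)" using continuous_map_image_subset_topspace[OF cH'] q by auto
    then obtain U where U: "evenly U" "H q \<in> U" using evenly_cover by blast
    have oU: "openin (fst B) U" using U(1) unfolding evenly_def by (rule conjunct1)
    have "openin (top_of_set S) {x \<in> topspace (top_of_set S). H x \<in> U}"
      using cH' oU by (rule openin_continuous_map_preimage)
    then obtain Ob where Ob: "open Ob" "{x \<in> S. H x \<in> U} = S \<inter> Ob"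
      unfolding topspace_euclidean_subtopology openin_open by blast
    have "q \<in> Ob" using Ob(2) q U(2) by blast
    moreover have "Ob \<in> \<C>" unfolding \<C>_def using Ob U(1) by blast
    ultimately show "q \<in> \<Union>\<C>" by blast
  qed
  have Sne: "(0,0) \<in> S" unfolding S_def by simp
  have Cne: "\<C> \<noteq> {}" using cover Sne by auto
  have Copen: "\<And>Ob. Ob \<in> \<C> \<Longrightarrow> open Ob" unfolding \<C>_def by blast
  have cS: "compact S" unfolding S_def by (intro compact_Times compact_Icc)
  obtain \<delta> where d: "0 < \<delta>" "\<And>T. T \<subseteq> S \<Longrightarrow> diameter T < \<delta> \<Longrightarrow> \<exists>Ob \<in> \<C>. T \<subseteq> Ob"
    using Lebesgue_number_lemma[OF cS Cne cover Copen] by blast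
  define \<eta> where "\<eta> = \<delta> / 3"
  have eta: "0 < \<eta>" unfolding \<eta>_def using d(1) by simp
  have base: "LP H ({a..b}\<times>{c..d})"
    if "0 \<le> a" "a \<le> b" "b \<le> 1" "0 \<le> c" "c \<le> d" "d \<le> 1" "b - a \<le> \<eta>" "d - c \<le> \<eta>" for a b c d
  proof -
    let ?T = "{a..b}\<times>{c..d}"
    have TS: "?T \<subseteq> S" unfolding S_def using that by auto
    have "diameter ?T \<le> 2 * \<eta>"
    proof (rule diameter_le)
      show "?T \<noteq> {} \<or> 0 \<le> 2 * \<eta>" using eta by simp
      fix x y assume x: "x \<in> ?T" and y: "y \<in> ?T"
      obtain x1 x2 where xx: "x = (x1, x2)" by (cases x)
      obtain y1 y2 where yy: "y = (y1, y2)" by (cases y)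
      have "norm (x - y) = norm (x1 - y1, x2 - y2)" unfolding xx yy by simp
      also have "\<dots> \<le> norm (x1 - y1) + norm (x2 - y2)" by (rule norm_Pair_le)
      also have "\<dots> \<le> \<eta> + \<eta>" using x y that unfolding xx yy by (intro add_mono) auto
      finally show "norm (x - y) \<le> 2 * \<eta>" by simp
    qed
    also have "\<dots> < \<delta>" unfolding \<eta>_def using d(1) by simp
    finally obtain Ob where Ob: "Ob \<in> \<C>" "?T \<subseteq> Ob" using d(2) TS by blast
    then obtain U where U: "evenly U" "\<forall>q\<in>S \<inter> Ob. H q \<in> U" unfolding \<C>_def by blast
    have HU: "\<And>q. q \<in> ?T \<Longrightarrow> H q \<in> U" using U(2) Ob(2) TS by blast
    have cT: "continuous_map (top_of_set ?T) (fst B) H" using cH' TS by (rule cont_restrict)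
    show ?thesis using LP_small[of U ?T H, OF U(1) HU cT] .
  qed
  have P1: "\<forall>a b c d. 0 \<le> a \<and> a \<le> b \<and> b \<le> 1 \<and> 0 \<le> c \<and> c \<le> d \<and> d \<le> 1 \<and>
      b - a \<le> real (Suc m) * \<eta> \<and> d - c \<le> \<eta> \<longrightarrow> LP H ({a..b}\<times>{c..d})" for m
  proof (induction m)
    case 0
    then show ?case using base by simp
  next
    case (Suc m)
    show ?case
    proof (intro allI impI)
      fix a b c d assume h: "0 \<le> a \<and> a \<le> b \<and> b \<le> 1 \<and> 0 \<le> c \<and> c \<le> d \<and> d \<le> 1 \<and>
        b - a \<le> real (Suc (Suc m)) * \<eta> \<and> d - c \<le> \<eta>"
      show "LP H ({a..b}\<times>{c..d})"
      proof (cases "b - a \<le> real (Suc m) * \<eta>")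
        case True then show ?thesis using Suc.IH h by blast
      next
        case False
        define a' where "a' = a + real (Suc m) * \<eta>"
        have a': "a \<le> a'" "a' \<le> b" "b - a' \<le> \<eta>" "a' - a \<le> real (Suc m) * \<eta>"
          using False h eta unfolding a'_def by (auto simp: algebra_simps)
        have L1: "LP H ({a..a'}\<times>{c..d})" using Suc.IH h a' by auto
        have L2: "LP H ({a'..b}\<times>{c..d})" using base h a' by auto
        have I: "{a..a'}\<times>{c..d} \<inter> {a'..b}\<times>{c..d} = {a'}\<times>{c..d}" using a' by auto
        have "LP H ({a..a'}\<times>{c..d} \<union> {a'..b}\<times>{c..d})"
        proof (rule LP_glue[OF _ _ _ _ L1 L2])
          show "closed ({a..a'}\<times>{c..d})" by (intro closed_Times closed_atLeastAtMost)
          show "closed ({a'..b}\<times>{c..d})" by (intro closed_Times closed_atLeastAtMost)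
          show "connected ({a..a'}\<times>{c..d} \<inter> {a'..b}\<times>{c..d})" unfolding I
            by (intro connected_Times connected_sing connected_Icc)
          show "{a..a'}\<times>{c..d} \<inter> {a'..b}\<times>{c..d} \<noteq> {}" unfolding I using h by simp
        qed
        moreover have "{a..a'}\<times>{c..d} \<union> {a'..b}\<times>{c..d} = {a..b}\<times>{c..d}" using a' by auto
        ultimately show ?thesis by simp
      qed
    qed
  qed
  obtain m where m: "1 < real m * \<eta>" using ex_less_of_nat_mult[OF eta] by blast
  have P2: "\<forall>c d. 0 \<le> c \<and> c \<le> d \<and> d \<le> 1 \<and> d - c \<le> real (Suc k) * \<eta> \<longrightarrow> LP H ({0..1}\<times>{c..d})" for k
  proof (induction k)
    case 0
    show ?case
    proof (intro allI impI)
      fix c d assume h: "0 \<le> c \<and> c \<le> d \<and> d \<le> 1 \<and> d - c \<le> real (Suc 0) * \<eta>"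
      have "1 - 0 \<le> real (Suc m) * \<eta>" using m eta by (simp add: algebra_simps)
      then show "LP H ({0..1}\<times>{c..d})" using P1[of m] h by auto
    qed
  next
    case (Suc k)
    show ?case
    proof (intro allI impI)
      fix c d assume h: "0 \<le> c \<and> c \<le> d \<and> d \<le> 1 \<and> d - c \<le> real (Suc (Suc k)) * \<eta>"
      show "LP H ({0..1}\<times>{c..d})"
      proof (cases "d - c \<le> real (Suc k) * \<eta>")
        case True then show ?thesis using Suc.IH h by blast
      next
        case False
        define c' where "c' = c + real (Suc k) * \<eta>"
        have c': "c \<le> c'" "c' \<le> d" "d - c' \<le> \<eta>" "c' - c \<le> real (Suc k) * \<eta>"
          using False h eta unfolding c'_def by (auto simp: algebra_simps)
        have L1: "LP H ({0..1}\<times>{c..c'})" using Suc.IH h c' by auto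
        have "1 - 0 \<le> real (Suc m) * \<eta>" using m eta by (simp add: algebra_simps)
        then have L2: "LP H ({0..1}\<times>{c'..d})" using P1[of m] h c' eta by auto
        have I: "{0..1}\<times>{c..c'} \<inter> {0..1}\<times>{c'..d} = {0..1::real}\<times>{c'}" using c' by auto
        have "LP H ({0..1}\<times>{c..c'} \<union> {0..1}\<times>{c'..d})"
        proof (rule LP_glue[OF _ _ _ _ L1 L2])
          show "closed ({0..1::real}\<times>{c..c'})" by (intro closed_Times closed_atLeastAtMost)
          show "closed ({0..1::real}\<times>{c'..d})" by (intro closed_Times closed_atLeastAtMost)
          show "connected ({0..1::real}\<times>{c..c'} \<inter> {0..1}\<times>{c'..d})" unfolding I
            by (intro connected_Times connected_sing connected_Icc)
          show "{0..1::real}\<times>{c..c'} \<inter> {0..1}\<times>{c'..d} \<noteq> {}" unfolding I by simp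
        qed
        moreover have "{0..1}\<times>{c..c'} \<union> {0..1}\<times>{c'..d} = {0..1::real}\<times>{c..d}" using c' by auto
        ultimately show ?thesis by simp
      qed
    qed
  qed
  have "1 - 0 \<le> real (Suc m) * \<eta>" using m eta by (simp add: algebra_simps)
  then show ?thesis using P2[of m] by simp
qed

end


context scov
begin

lemma hom_lift:
  assumes H: "dihomotopy B H" and q0: "q0 \<in> {0..1}\<times>{0..1}" and e: "e \<in> topspace (fst E)"
    and eq: "H q0 = \<rho> e"
  shows "(\<exists>H'. dihomotopy E H' \<and> (\<forall>s\<in>{0..1}. \<forall>t\<in>{0..1}. \<rho> (H' (s, t)) = H (s, t)) \<and> H' q0 = e) \<and>
    (\<forall>H1 H2. dihomotopy E H1 \<and> (\<forall>s\<in>{0..1}. \<forall>t\<in>{0..1}. \<rho> (H1 (s, t)) = H (s, t)) \<and> H1 q0 = e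
       \<and> dihomotopy E H2 \<and> (\<forall>s\<in>{0..1}. \<forall>t\<in>{0..1}. \<rho> (H2 (s, t)) = H (s, t)) \<and> H2 q0 = e
       \<longrightarrow> (\<forall>s\<in>{0..1}. \<forall>t\<in>{0..1}. H1 (s, t) = H2 (s, t)))"
proof
  have HH: "continuous_map (prod_topology (top_of_set {0..1}) (top_of_set {0..1})) (fst B) H \<and>
     (\<forall>s\<in>{0..1}. dipath B (\<lambda>t. H (s, t)))" using H unfolding dihomotopy_def .
  have cH: "continuous_map (top_of_set ({0..1}\<times>{0..1})) (fst B) H"
    using HH[THEN conjunct1] by (simp only: prod_topology_subtopology_eu)
  have dH: "\<And>s. s \<in> {0..1} \<Longrightarrow> dipath B (\<lambda>t. H (s, t))" using HH[THEN conjunct2] by blast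
  obtain f where f: "continuous_map (top_of_set ({0..1}\<times>{0..1})) (fst E) f"
    "\<And>q. q \<in> {0..1}\<times>{0..1} \<Longrightarrow> \<rho> (f q) = H q" "f q0 = e"
    by (rule LPE[OF LP_square[OF cH] q0 e eq[symmetric]]) blast
  have "dihomotopy E f" unfolding dihomotopy_def
  proof (intro conjI ballI)
    show "continuous_map (prod_topology (top_of_set {0..1}) (top_of_set {0..1})) (fst E) f"
      using f(1) by (simp only: prod_topology_subtopology_eu)
    fix s :: real assume s: "s \<in> {0..1}"
    have "continuous_on {0..1} (\<lambda>t::real. (s, t))" by (intro continuous_intros)
    moreover have "(\<lambda>t::real. (s, t)) \<in> {0..1} \<rightarrow> {0..1}\<times>{0..1}" using s by auto
    ultimately have "continuous_map (top_of_set {0..1}) (top_of_set ({0..1}\<times>{0..1})) (\<lambda>t::real. (s, t))"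
      by (simp only: continuous_map_subtopology_eu)
    from continuous_map_compose[OF this f(1)]
    have cf: "continuous_map (top_of_set {0..1}) (fst E) (\<lambda>t. f (s, t))" by (simp only: o_def)
    show "dipath E (\<lambda>t. f (s, t))"
    proof (rule lift_dipath[OF cf dH[OF s]])
      fix t :: real assume "t \<in> {0..1}"
      then show "\<rho> (f (s, t)) = H (s, t)" using f(2) s by simp
    qed
  qed
  moreover have "\<forall>s\<in>{0..1}. \<forall>t\<in>{0..1}. \<rho> (f (s, t)) = H (s, t)" using f(2) by simp
  ultimately show "\<exists>H'. dihomotopy E H' \<and> (\<forall>s\<in>{0..1}. \<forall>t\<in>{0..1}. \<rho> (H' (s, t)) = H (s, t)) \<and> H' q0 = e"
    using f(3) by blast
next
  show "\<forall>H1 H2. dihomotopy E H1 \<and> (\<forall>s\<in>{0..1}. \<forall>t\<in>{0..1}. \<rho> (H1 (s, t)) = H (s, t)) \<and> H1 q0 = e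
       \<and> dihomotopy E H2 \<and> (\<forall>s\<in>{0..1}. \<forall>t\<in>{0..1}. \<rho> (H2 (s, t)) = H (s, t)) \<and> H2 q0 = e
       \<longrightarrow> (\<forall>s\<in>{0..1}. \<forall>t\<in>{0..1}. H1 (s, t) = H2 (s, t))"
  proof (intro allI impI)
    fix H1 H2 assume h: "dihomotopy E H1 \<and> (\<forall>s\<in>{0..1}. \<forall>t\<in>{0..1}. \<rho> (H1 (s, t)) = H (s, t)) \<and> H1 q0 = e
       \<and> dihomotopy E H2 \<and> (\<forall>s\<in>{0..1}. \<forall>t\<in>{0..1}. \<rho> (H2 (s, t)) = H (s, t)) \<and> H2 q0 = e"
    have c1: "continuous_map (top_of_set ({0..1}\<times>{0..1})) (fst E) H1"
      using h[THEN conjunct1] unfolding dihomotopy_def by (simp only: prod_topology_subtopology_eu)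
    have c2: "continuous_map (top_of_set ({0..1}\<times>{0..1})) (fst E) H2"
      using h[THEN conjunct2, THEN conjunct2, THEN conjunct2, THEN conjunct1] unfolding dihomotopy_def
      by (simp only: prod_topology_subtopology_eu)
    have l1: "\<forall>s\<in>{0..1}. \<forall>t\<in>{0..1}. \<rho> (H1 (s, t)) = H (s, t)" using h by blast
    have l2: "\<forall>s\<in>{0..1}. \<forall>t\<in>{0..1}. \<rho> (H2 (s, t)) = H (s, t)" using h by blast
    have e12: "H1 q0 = H2 q0" using h by simp
    have "\<forall>x\<in>topspace (top_of_set ({0..1::real}\<times>{0..1::real})). H1 x = H2 x"
    proof (rule lift_unique[OF _ c1 c2])
      show "connected_space (top_of_set ({0..1::real}\<times>{0..1::real}))"
        by (rule connected_space_subtopology)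
          (simp add: connectedin_iff_connected connected_Times connected_Icc)
      fix x assume "x \<in> topspace (top_of_set ({0..1::real}\<times>{0..1::real}))"
      then obtain s t where x: "x = (s, t)" "s \<in> {0..1}" "t \<in> {0..1}" by auto
      show "\<rho> (H1 x) = \<rho> (H2 x)" using l1 l2 x by simp
    next
      show "q0 \<in> topspace (top_of_set ({0..1::real}\<times>{0..1::real}))" using q0 by simp
      show "H1 q0 = H2 q0" by (rule e12)
    qed
    then show "\<forall>s\<in>{0..1}. \<forall>t\<in>{0..1}. H1 (s, t) = H2 (s, t)" by simp
  qed
qed

end

theorem mainTheorem12:
  fixes E :: "'e strm" and B :: "'b strm" and \<rho> :: "'e \<Rightarrow> 'b"
  assumes cov: "stream_covering E B \<rho>"
  shows "(path_ordered E \<longleftrightarrow> path_ordered B)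
    \<and> (\<forall>e\<in>topspace (fst E). \<forall>H. dihomotopy B H \<and> H (0, 0) = \<rho> e \<longrightarrow>
          (\<exists>H'. dihomotopy E H' \<and> (\<forall>s\<in>{0..1}. \<forall>t\<in>{0..1}. \<rho> (H' (s, t)) = H (s, t))
                \<and> H' (0, 0) = e) \<and>
          (\<forall>H1 H2. dihomotopy E H1 \<and> (\<forall>s\<in>{0..1}. \<forall>t\<in>{0..1}. \<rho> (H1 (s, t)) = H (s, t)) \<and> H1 (0, 0) = e
               \<and> dihomotopy E H2 \<and> (\<forall>s\<in>{0..1}. \<forall>t\<in>{0..1}. \<rho> (H2 (s, t)) = H (s, t)) \<and> H2 (0, 0) = e
               \<longrightarrow> (\<forall>s\<in>{0..1}. \<forall>t\<in>{0..1}. H1 (s, t) = H2 (s, t))))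
    \<and> (\<forall>e\<in>topspace (fst E). \<forall>H. dihomotopy B H \<and> H (0, 1) = \<rho> e \<longrightarrow>
          (\<exists>H'. dihomotopy E H' \<and> (\<forall>s\<in>{0..1}. \<forall>t\<in>{0..1}. \<rho> (H' (s, t)) = H (s, t))
                \<and> H' (0, 1) = e) \<and>
          (\<forall>H1 H2. dihomotopy E H1 \<and> (\<forall>s\<in>{0..1}. \<forall>t\<in>{0..1}. \<rho> (H1 (s, t)) = H (s, t)) \<and> H1 (0, 1) = e
               \<and> dihomotopy E H2 \<and> (\<forall>s\<in>{0..1}. \<forall>t\<in>{0..1}. \<rho> (H2 (s, t)) = H (s, t)) \<and> H2 (0, 1) = e
               \<longrightarrow> (\<forall>s\<in>{0..1}. \<forall>t\<in>{0..1}. H1 (s, t) = H2 (s, t))))"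
proof -
  interpret scov E B \<rho> by (rule scov.intro[OF cov])
  have p1: "path_ordered E \<longleftrightarrow> path_ordered B" using po_E_B po_B_E by blast
  have p2: "\<forall>e\<in>topspace (fst E). \<forall>H. dihomotopy B H \<and> H (0, 0) = \<rho> e \<longrightarrow>
          (\<exists>H'. dihomotopy E H' \<and> (\<forall>s\<in>{0..1}. \<forall>t\<in>{0..1}. \<rho> (H' (s, t)) = H (s, t))
                \<and> H' (0, 0) = e) \<and>
          (\<forall>H1 H2. dihomotopy E H1 \<and> (\<forall>s\<in>{0..1}. \<forall>t\<in>{0..1}. \<rho> (H1 (s, t)) = H (s, t)) \<and> H1 (0, 0) = e
               \<and> dihomotopy E H2 \<and> (\<forall>s\<in>{0..1}. \<forall>t\<in>{0..1}. \<rho> (H2 (s, t)) = H (s, t)) \<and> H2 (0, 0) = e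
               \<longrightarrow> (\<forall>s\<in>{0..1}. \<forall>t\<in>{0..1}. H1 (s, t) = H2 (s, t)))"
  proof (intro ballI allI impI)
    fix e H assume e: "e \<in> topspace (fst E)" and h: "dihomotopy B H \<and> H (0, 0) = \<rho> e"
    have q0: "(0::real, 0::real) \<in> {0..1}\<times>{0..1}" by simp
    show "(\<exists>H'. dihomotopy E H' \<and> (\<forall>s\<in>{0..1}. \<forall>t\<in>{0..1}. \<rho> (H' (s, t)) = H (s, t))
                \<and> H' (0, 0) = e) \<and>
          (\<forall>H1 H2. dihomotopy E H1 \<and> (\<forall>s\<in>{0..1}. \<forall>t\<in>{0..1}. \<rho> (H1 (s, t)) = H (s, t)) \<and> H1 (0, 0) = e
               \<and> dihomotopy E H2 \<and> (\<forall>s\<in>{0..1}. \<forall>t\<in>{0..1}. \<rho> (H2 (s, t)) = H (s, t)) \<and> H2 (0, 0) = e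
               \<longrightarrow> (\<forall>s\<in>{0..1}. \<forall>t\<in>{0..1}. H1 (s, t) = H2 (s, t)))"
      using h by (intro hom_lift[OF _ q0 e]) (elim conjE; assumption)+
  qed
  have p3: "\<forall>e\<in>topspace (fst E). \<forall>H. dihomotopy B H \<and> H (0, 1) = \<rho> e \<longrightarrow>
          (\<exists>H'. dihomotopy E H' \<and> (\<forall>s\<in>{0..1}. \<forall>t\<in>{0..1}. \<rho> (H' (s, t)) = H (s, t))
                \<and> H' (0, 1) = e) \<and>
          (\<forall>H1 H2. dihomotopy E H1 \<and> (\<forall>s\<in>{0..1}. \<forall>t\<in>{0..1}. \<rho> (H1 (s, t)) = H (s, t)) \<and> H1 (0, 1) = e
               \<and> dihomotopy E H2 \<and> (\<forall>s\<in>{0..1}. \<forall>t\<in>{0..1}. \<rho> (H2 (s, t)) = H (s, t)) \<and> H2 (0, 1) = e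
               \<longrightarrow> (\<forall>s\<in>{0..1}. \<forall>t\<in>{0..1}. H1 (s, t) = H2 (s, t)))"
  proof (intro ballI allI impI)
    fix e H assume e: "e \<in> topspace (fst E)" and h: "dihomotopy B H \<and> H (0, 1) = \<rho> e"
    have q0: "(0::real, 1::real) \<in> {0..1}\<times>{0..1}" by simp
    show "(\<exists>H'. dihomotopy E H' \<and> (\<forall>s\<in>{0..1}. \<forall>t\<in>{0..1}. \<rho> (H' (s, t)) = H (s, t))
                \<and> H' (0, 1) = e) \<and>
          (\<forall>H1 H2. dihomotopy E H1 \<and> (\<forall>s\<in>{0..1}. \<forall>t\<in>{0..1}. \<rho> (H1 (s, t)) = H (s, t)) \<and> H1 (0, 1) = e
               \<and> dihomotopy E H2 \<and> (\<forall>s\<in>{0..1}. \<forall>t\<in>{0..1}. \<rho> (H2 (s, t)) = H (s, t)) \<and> H2 (0, 1) = e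
               \<longrightarrow> (\<forall>s\<in>{0..1}. \<forall>t\<in>{0..1}. H1 (s, t) = H2 (s, t)))"
      using h by (intro hom_lift[OF _ q0 e]) (elim conjE; assumption)+
  qed
  show ?thesis using p1 p2 p3 by (intro conjI)
qed



end
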